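(* Let $k\geqslant 2$ be an integer, and in the braid group $B_5$ let $\delta_3=\sigma_2\sigma_1$, $\Delta_3=\sigma_2\sigma_1\sigma_2$ and $\beta_k=\delta_3^{3k+1}\sigma_4^{2k+2}\sigma_3\sigma_4^{2k-1}$. Then the left normal form of $\beta_k$ is \[\beta_k=(\Delta_3\sigma_4)^{2k}(\delta_3\sigma_4\sigma_3\sigma_4)(\sigma_3\sigma_4)(\sigma_4)^{2k-3}.\] In particular $\inf\beta_k=0$ and $\sup\beta_k=4k-1$.
   Context: $B_5$ has generators $\sigma_1,\dots,\sigma_4$ with the standard braid relations; $B_5^+$ is the positive braid monoid, $\Delta=(\sigma_1\sigma_2\sigma_3\sigma_4)(\sigma_1\sigma_2\sigma_3)(\sigma_1\sigma_2)\sigma_1$. Write $x\preccurlyeq y$ iff $x^{-1}y\in B_5^+$; simple braids are those $x$ with $1\preccurlyeq x\preccurlyeq\Delta$. Simple $s_1,s_2$ are left-weighted if no generator $\sigma_i$ makes both $s_1\sigma_i$ and $\sigma_i^{-1}s_2$ simple. The left normal form of $x$ is the unique expression $x=\Delta^p x_1\cdots x_r$ with $x_i$ simple, different from $1$ and $\Delta$, and consecutive factors left-weighted; $\inf x=p$ and $\sup x=p+r$. *)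

theory Defs
  imports Main
begin

text \<open>A letter (i, True) is sigma_i, (i, False) is sigma_i^{-1}.
Braids are words modulo the congruence bequiv generated by free cancellation
and the braid relations; equality in B_5 is bequiv.\<close>

type_synonym bword = "(nat \<times> bool) list"

inductive bequiv :: "bword \<Rightarrow> bword \<Rightarrow> bool" where
  refl: "bequiv w w"
| sym: "bequiv u v \<Longrightarrow> bequiv v u"
| trans: "bequiv u v \<Longrightarrow> bequiv v w \<Longrightarrow> bequiv u w"
| ctx: "bequiv u v \<Longrightarrow> bequiv (a @ u @ b) (a @ v @ b)"
| cancel: "i \<in> {1..4} \<Longrightarrow> bequiv [(i, e), (i, \<not> e)] []"
| far_comm: "i \<in> {1..4} \<Longrightarrow> j \<in> {1..4} \<Longrightarrow> i + 2 \<le> j \<Longrightarrow>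
     bequiv [(i, True), (j, True)] [(j, True), (i, True)]"
| braid_rel: "i \<in> {1..3} \<Longrightarrow>
     bequiv [(i, True), (Suc i, True), (i, True)] [(Suc i, True), (i, True), (Suc i, True)]"

definition sig :: "nat \<Rightarrow> bword" where "sig i = [(i, True)]"

definition winv :: "bword \<Rightarrow> bword" where
  "winv w = rev (map (\<lambda>(i, e). (i, \<not> e)) w)"

definition wpow :: "bword \<Rightarrow> nat \<Rightarrow> bword" where
  "wpow w n = concat (replicate n w)"

definition Delta :: bword where
  "Delta = sig 1 @ sig 2 @ sig 3 @ sig 4 @ sig 1 @ sig 2 @ sig 3 @ sig 1 @ sig 2 @ sig 1"

definition Delta_pow :: "int \<Rightarrow> bword" where
  "Delta_pow p = (if 0 \<le> p then wpow Delta (nat p) else wpow (winv Delta) (nat (- p)))"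

definition positive :: "bword \<Rightarrow> bool" where
  "positive x \<longleftrightarrow> (\<exists>w. (\<forall>l\<in>set w. fst l \<in> {1..4} \<and> snd l) \<and> bequiv x w)"

definition prefix_le :: "bword \<Rightarrow> bword \<Rightarrow> bool" where
  "prefix_le x y \<longleftrightarrow> positive (winv x @ y)"

definition simple :: "bword \<Rightarrow> bool" where
  "simple x \<longleftrightarrow> prefix_le [] x \<and> prefix_le x Delta"

definition left_weighted :: "bword \<Rightarrow> bword \<Rightarrow> bool" where
  "left_weighted s1 s2 \<longleftrightarrow>
     \<not> (\<exists>i\<in>{1..4}. simple (s1 @ sig i) \<and> simple (winv (sig i) @ s2))"

definition is_LNF :: "bword \<Rightarrow> int \<Rightarrow> bword list \<Rightarrow> bool" where
  "is_LNF x p xs \<longleftrightarrow>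
     bequiv x (Delta_pow p @ concat xs) \<and>
     (\<forall>s\<in>set xs. simple s \<and> \<not> bequiv s [] \<and> \<not> bequiv s Delta) \<and>
     (\<forall>i. Suc i < length xs \<longrightarrow> left_weighted (xs ! i) (xs ! Suc i))"

definition binf :: "bword \<Rightarrow> int" where
  "binf x = (THE p. \<exists>xs. is_LNF x p xs)"

definition bsup :: "bword \<Rightarrow> int" where
  "bsup x = (THE n. \<exists>p xs. is_LNF x p xs \<and> n = p + int (length xs))"

definition delta3 :: bword where "delta3 = sig 2 @ sig 1"
definition Delta3 :: bword where "Delta3 = sig 2 @ sig 1 @ sig 2"

end

theory Submission
  imports Defs "HOL-Combinatorics.Multiset_Permutations"
begin

section \<open>Permutations of five strands\<close>

definition idp :: "nat list" where "idp = [0,1,2,3,4]"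
definition w0 :: "nat list" where "w0 = [4,3,2,1,0]"

fun sw5 :: "nat \<Rightarrow> nat list \<Rightarrow> nat list" where
 "sw5 i [a,b,c,d,e] = (if i = 1 then [b,a,c,d,e] else if i = 2 then [a,c,b,d,e] else
     if i = 3 then [a,b,d,c,e] else if i = 4 then [a,b,c,e,d] else [a,b,c,d,e])"
| "sw5 i p = p"

fun inv5 :: "nat list \<Rightarrow> nat" where
 "inv5 [a,b,c,d,e] = (if b<a then 1 else 0) + (if c<a then 1 else 0) + (if d<a then 1 else 0) + (if e<a then 1 else 0)
   + (if c<b then 1 else 0) + (if d<b then 1 else 0) + (if e<b then 1 else 0) + (if d<c then 1 else 0)
   + (if e<c then 1 else 0) + (if e<d then 1 else 0)"
| "inv5 _ = 0"

definition lsw :: "nat \<Rightarrow> nat list \<Rightarrow> nat list" where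
  "lsw a p = (if 1 \<le> a \<and> a \<le> 4 then map (\<lambda>x. if x + 1 = a then a else if x = a then a - 1 else x) p else p)"

definition pcomp :: "nat list \<Rightarrow> nat list \<Rightarrow> nat list" where
  "pcomp p q = map (\<lambda>x. p!x) q"

definition inS :: "nat \<Rightarrow> nat list \<Rightarrow> bool" where
  "inS a p \<longleftrightarrow> inv5 (lsw a p) < inv5 p"

definition isp :: "nat list \<Rightarrow> bool" where
  "isp p \<longleftrightarrow> distinct p \<and> set p = {0,1,2,3,4}"

definition jn :: "nat list \<Rightarrow> nat \<Rightarrow> nat list" where
  "jn p i = (if inS i p then p else
     (let x = i - 1; y = i; A = takeWhile (\<lambda>z. z \<noteq> x) p; r = tl (dropWhile (\<lambda>z. z \<noteq> x) p);
          B = takeWhile (\<lambda>z. z \<noteq> y) r; C = tl (dropWhile (\<lambda>z. z \<noteq> y) r)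
      in A @ filter (\<lambda>z. y < z) B @ [y, x] @ filter (\<lambda>z. z < x) B @ C))"

definition P5 :: "nat list list" where
  "P5 = [[4,3,2,1,0], [3,4,2,1,0], [4,2,3,1,0], [2,4,3,1,0], [3,2,4,1,0], [2,3,4,1,0], [4,3,1,2,0], [3,4,1,2,0], [4,1,3,2,0], [1,4,3,2,0], [3,1,4,2,0], [1,3,4,2,0], [4,2,1,3,0], [2,4,1,3,0], [4,1,2,3,0], [1,4,2,3,0], [2,1,4,3,0], [1,2,4,3,0], [3,2,1,4,0], [2,3,1,4,0], [3,1,2,4,0], [1,3,2,4,0], [2,1,3,4,0], [1,2,3,4,0], [4,3,2,0,1], [3,4,2,0,1], [4,2,3,0,1], [2,4,3,0,1], [3,2,4,0,1], [2,3,4,0,1], [4,3,0,2,1], [3,4,0,2,1], [4,0,3,2,1], [0,4,3,2,1], [3,0,4,2,1], [0,3,4,2,1], [4,2,0,3,1], [2,4,0,3,1], [4,0,2,3,1], [0,4,2,3,1], [2,0,4,3,1], [0,2,4,3,1], [3,2,0,4,1], [2,3,0,4,1], [3,0,2,4,1], [0,3,2,4,1], [2,0,3,4,1], [0,2,3,4,1], [4,3,1,0,2], [3,4,1,0,2], [4,1,3,0,2], [1,4,3,0,2], [3,1,4,0,2], [1,3,4,0,2], [4,3,0,1,2], [3,4,0,1,2], [4,0,3,1,2], [0,4,3,1,2], [3,0,4,1,2], [0,3,4,1,2], [4,1,0,3,2], [1,4,0,3,2], [4,0,1,3,2], [0,4,1,3,2], [1,0,4,3,2], [0,1,4,3,2],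 [3,1,0,4,2], [1,3,0,4,2], [3,0,1,4,2], [0,3,1,4,2], [1,0,3,4,2], [0,1,3,4,2], [4,2,1,0,3], [2,4,1,0,3], [4,1,2,0,3], [1,4,2,0,3], [2,1,4,0,3], [1,2,4,0,3], [4,2,0,1,3], [2,4,0,1,3], [4,0,2,1,3], [0,4,2,1,3], [2,0,4,1,3], [0,2,4,1,3], [4,1,0,2,3], [1,4,0,2,3], [4,0,1,2,3], [0,4,1,2,3], [1,0,4,2,3], [0,1,4,2,3], [2,1,0,4,3], [1,2,0,4,3], [2,0,1,4,3], [0,2,1,4,3], [1,0,2,4,3], [0,1,2,4,3], [3,2,1,0,4], [2,3,1,0,4], [3,1,2,0,4], [1,3,2,0,4], [2,1,3,0,4], [1,2,3,0,4], [3,2,0,1,4], [2,3,0,1,4], [3,0,2,1,4], [0,3,2,1,4], [2,0,3,1,4], [0,2,3,1,4], [3,1,0,2,4], [1,3,0,2,4], [3,0,1,2,4], [0,3,1,2,4], [1,0,3,2,4], [0,1,3,2,4], [2,1,0,3,4], [1,2,0,3,4], [2,0,1,3,4], [0,2,1,3,4], [1,0,2,3,4], [0,1,2,3,4]]"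

lemma P5_eq: "permutations_of_set_list [0,1,2,3,4] = P5"
  unfolding P5_def by code_simp

lemma isp_P5: "isp p \<Longrightarrow> p \<in> set P5"
proof -
  assume "isp p"
  hence "p \<in> permutations_of_set (set [0,1,2,3,4::nat])"
    by (auto simp: isp_def permutations_of_set_def)
  thus ?thesis unfolding P5_eq[symmetric] permutations_of_list by simp
qed

lemma P5_all: "list_all P P5 \<Longrightarrow> isp p \<Longrightarrow> P p"
  using isp_P5 by (auto simp: list_all_iff)

lemma FF1: "list_all (\<lambda>p. list_all (\<lambda>i. inv5 (sw5 i p) \<le> inv5 p + 1 \<and> inv5 p \<le> inv5 (sw5 i p) + 1) [1,2,3,4]) P5"
  unfolding P5_def by code_simp

lemma FF1L: "list_all (\<lambda>p. list_all (\<lambda>i. inv5 (lsw i p) \<le> inv5 p + 1 \<and> inv5 p \<le> inv5 (lsw i p) + 1) [1,2,3,4]) P5"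
  unfolding P5_def by code_simp

lemma FF0: "list_all (\<lambda>i. \<not> inS i idp \<and> jn idp i = sw5 i idp \<and> inv5 (sw5 i idp) = 1) [1,2,3,4]"
  by code_simp

lemma FF2: "list_all (\<lambda>p. list_all (\<lambda>a. list_all (\<lambda>b. a \<noteq> b \<and> inS a p \<and> inS b p \<longrightarrow>
   inS a (lsw b p) \<and> ((b = a + 1 \<or> a = b + 1) \<longrightarrow> inS b (lsw a (lsw b p)))) [1,2,3,4]) [1,2,3,4]) P5"
  unfolding P5_def by code_simp

lemma FF3: "list_all (\<lambda>p. list_all (\<lambda>a. inS a p) [1,2,3,4] \<longrightarrow> p = w0) P5"
  unfolding P5_def by code_simp

lemma FF4: "list_all (\<lambda>p. p \<noteq> w0 \<longrightarrow> list_ex (\<lambda>j. inv5 (sw5 j p) = inv5 p + 1) [1,2,3,4]) P5"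
  unfolding P5_def by code_simp

lemma FF5: "list_all (\<lambda>p. inv5 p \<le> 10 \<and> (inv5 p = 0 \<longrightarrow> p = idp)) P5"
  unfolding P5_def by code_simp

lemma FFJ1: "list_all (\<lambda>p. list_all (\<lambda>i. (\<not> inS i p \<longrightarrow> jn p i \<noteq> p)) [1,2,3,4]) P5"
  unfolding P5_def by code_simp

definition cJ2 :: "nat list \<Rightarrow> nat \<Rightarrow> nat \<Rightarrow> nat list \<Rightarrow> bool" where
  "cJ2 J a i r1 = (J = lsw a (lsw i r1) \<and> inv5 J = inv5 r1 + 2)"
definition cJ :: "nat list \<Rightarrow> nat \<Rightarrow> nat \<Rightarrow> nat list \<Rightarrow> nat list \<Rightarrow> bool" where
  "cJ p i a r J = (if a + 2 \<le> i \<or> i + 2 \<le> a then J = lsw a r \<and> inv5 J = inv5 r + 1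
       else inS i r \<and> cJ2 J a i (jn (lsw i r) a))"
definition cP :: "nat list \<Rightarrow> nat list \<Rightarrow> bool" where
  "cP p D = list_all (\<lambda>i. if i \<in> set D then True else
      list_all (\<lambda>a. if a = i then True else if a \<in> set D then cJ p i a (jn (lsw a p) i) (jn p i) else True)
        [1,2,3,4]) [1,2,3,4]"

lemma FFJ2: "list_all (\<lambda>p. cP p (filter (\<lambda>a. inS a p) [1,2,3,4])) P5"
  unfolding P5_def by code_simp

section \<open>The positive braid monoid\<close>

definition far :: "nat \<Rightarrow> nat \<Rightarrow> bool" where
  "far i j \<longleftrightarrow> 1 \<le> i \<and> i \<le> 4 \<and> 1 \<le> j \<and> j \<le> 4 \<and> (i + 2 \<le> j \<or> j + 2 \<le> i)"
definition adj :: "nat \<Rightarrow> nat \<Rightarrow> bool" where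
  "adj i j \<longleftrightarrow> 1 \<le> i \<and> i \<le> 4 \<and> 1 \<le> j \<and> j \<le> 4 \<and> (j = i + 1 \<or> i = j + 1)"

lemma far_sym: "far i j \<Longrightarrow> far j i" by (auto simp: far_def)
lemma adj_sym: "adj i j \<Longrightarrow> adj j i" by (auto simp: adj_def)
lemma far_ne: "far i j \<Longrightarrow> i \<noteq> j" by (auto simp: far_def)
lemma adj_ne: "adj i j \<Longrightarrow> i \<noteq> j" by (auto simp: adj_def)
lemma far_not_adj: "far i j \<Longrightarrow> \<not> adj i j" by (auto simp: adj_def far_def)
lemma adj_adj_far: "adj a c \<Longrightarrow> adj c b \<Longrightarrow> a \<noteq> b \<Longrightarrow> far a b" by (auto simp: adj_def far_def)
lemma far_or_adj: "1 \<le> i \<Longrightarrow> i \<le> 4 \<Longrightarrow> 1 \<le> j \<Longrightarrow> j \<le> 4 \<Longrightarrow> i \<noteq> j \<Longrightarrow> far i j \<or> adj i j"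
  by (auto simp: adj_def far_def)

inductive step :: "nat list \<Rightarrow> nat list \<Rightarrow> bool" where
  sf: "far i j \<Longrightarrow> step (xs @ i # j # ys) (xs @ j # i # ys)"
| sb: "adj i j \<Longrightarrow> step (xs @ i # j # i # ys) (xs @ j # i # j # ys)"

abbreviation peq :: "nat list \<Rightarrow> nat list \<Rightarrow> bool" where "peq \<equiv> step\<^sup>*\<^sup>*"

lemma step_sym: "step u v \<Longrightarrow> step v u"
  by (induction rule: step.induct) (auto intro: step.intros far_sym adj_sym)

lemma peq_sym: "peq u v \<Longrightarrow> peq v u"
  by (induction rule: rtranclp_induct) (auto intro: step_sym converse_rtranclp_into_rtranclp)

lemma peq_trans[trans]: "peq u v \<Longrightarrow> peq v w \<Longrightarrow> peq u w" by (rule rtranclp_trans)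

lemma step_length: "step u v \<Longrightarrow> length u = length v"
  by (induction rule: step.induct) auto

lemma peq_length: "peq u v \<Longrightarrow> length u = length v"
  by (induction rule: rtranclp_induct) (auto dest: step_length)

lemma step_app: "step u v \<Longrightarrow> step (w @ u @ z) (w @ v @ z)"
proof (induction rule: step.induct)
  case (sf i j xs ys) thus ?case using step.sf[of i j "w @ xs" "ys @ z"] by simp
next
  case (sb i j xs ys) thus ?case using step.sb[of i j "w @ xs" "ys @ z"] by simp
qed

lemma peq_app: "peq u v \<Longrightarrow> peq (w @ u @ z) (w @ v @ z)"
  by (induction rule: rtranclp_induct) (auto intro: rtranclp.rtrancl_into_rtrancl step_app)

lemma peq_appl: "peq u v \<Longrightarrow> peq (w @ u) (w @ v)"
  using peq_app[of u v w "[]"] by simp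
lemma peq_appr: "peq u v \<Longrightarrow> peq (u @ z) (v @ z)"
  using peq_app[of u v "[]" z] by simp
lemma peq_Cons: "peq u v \<Longrightarrow> peq (x # u) (x # v)"
  using peq_appl[of u v "[x]"] by simp
lemma peq_app2: "peq u v \<Longrightarrow> peq u' v' \<Longrightarrow> peq (u @ u') (v @ v')"
  by (meson peq_appl peq_appr peq_trans)

lemma pf: "far i j \<Longrightarrow> peq (i # j # ys) (j # i # ys)"
  using step.sf[of i j "[]" ys] by auto
lemma pb: "adj i j \<Longrightarrow> peq (i # j # i # ys) (j # i # j # ys)"
  using step.sb[of i j "[]" ys] by auto

definition CC :: "nat \<Rightarrow> nat \<Rightarrow> nat list \<Rightarrow> nat list \<Rightarrow> bool" where
  "CC a b X Y \<longleftrightarrow> (a = b \<and> peq X Y) \<or> (far a b \<and> (\<exists>Z. peq X (b # Z) \<and> peq Y (a # Z)))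
     \<or> (adj a b \<and> (\<exists>Z. peq X (b # a # Z) \<and> peq Y (a # b # Z)))"

lemma step_first: assumes "step (c # V) (b # Y)" shows "CC c b V Y"
  using assms
proof (cases rule: step.cases)
  case (sf i j xs ys)
  show ?thesis
  proof (cases xs)
    case Nil thus ?thesis using sf by (auto simp: CC_def)
  next
    case (Cons x xs')
    hence "step V Y" using sf by (auto intro: step.sf)
    thus ?thesis using sf Cons by (auto simp: CC_def)
  qed
next
  case (sb i j xs ys)
  show ?thesis
  proof (cases xs)
    case Nil thus ?thesis using sb by (auto simp: CC_def)
  next
    case (Cons x xs')
    hence "step V Y" using sb by (auto intro: step.sb)
    thus ?thesis using sb Cons by (auto simp: CC_def)
  qed
qed

lemma CC_left: "peq X V \<Longrightarrow> CC a b V Y \<Longrightarrow> CC a b X Y"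
  unfolding CC_def by (meson peq_trans)
lemma CC_right: "CC a b X V \<Longrightarrow> peq V Y \<Longrightarrow> CC a b X Y"
  unfolding CC_def by (meson peq_trans peq_sym)

lemma CC_cancel: "CC c c X Y \<Longrightarrow> peq X Y"
  unfolding CC_def using far_ne adj_ne by blast
lemma CC_far: "CC a b X Y \<Longrightarrow> far a b \<Longrightarrow> \<exists>Z. peq X (b # Z) \<and> peq Y (a # Z)"
  unfolding CC_def using far_ne far_not_adj by blast
lemma CC_adj: "CC a b X Y \<Longrightarrow> adj a b \<Longrightarrow> \<exists>Z. peq X (b # a # Z) \<and> peq Y (a # b # Z)"
  unfolding CC_def using adj_ne far_not_adj by blast
lemma CC_I1: "peq X Y \<Longrightarrow> CC a a X Y" by (simp add: CC_def)
lemma CC_If: "far a b \<Longrightarrow> peq X (b # Z) \<Longrightarrow> peq Y (a # Z) \<Longrightarrow> CC a b X Y" by (auto simp: CC_def)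
lemma CC_Ia: "adj a b \<Longrightarrow> peq X (b # a # Z) \<Longrightarrow> peq Y (a # b # Z) \<Longrightarrow> CC a b X Y" by (auto simp: CC_def)

lemma pc1: "peq u v \<Longrightarrow> peq (x # u) (x # v)" by (rule peq_Cons)
lemma pc2: "peq u v \<Longrightarrow> peq (x # y # u) (x # y # v)" by (intro peq_Cons)
lemma pc3: "peq u v \<Longrightarrow> peq (x # y # z # u) (x # y # z # v)" by (intro peq_Cons)
lemma pf1: "far i j \<Longrightarrow> peq (x # i # j # ys) (x # j # i # ys)" by (intro peq_Cons pf)
lemma pf2: "far i j \<Longrightarrow> peq (x # y # i # j # ys) (x # y # j # i # ys)" by (intro peq_Cons pf)
lemma pf3: "far i j \<Longrightarrow> peq (x # y # z # i # j # ys) (x # y # z # j # i # ys)" by (intro peq_Cons pf)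
lemma pb1: "adj i j \<Longrightarrow> peq (x # i # j # i # ys) (x # j # i # j # ys)" by (intro peq_Cons pb)
lemma pb2: "adj i j \<Longrightarrow> peq (x # y # i # j # i # ys) (x # y # j # i # j # ys)" by (intro peq_Cons pb)

lemma compose:
  assumes IH: "\<And>X' Y' a b. length X' < n \<Longrightarrow> peq (a # X') (b # Y') \<Longrightarrow> CC a b X' Y'"
    and lX: "length X = n" and h1: "CC a c X V" and h2: "CC c b V Y"
  shows "CC a b X Y"
proof (cases "a = c")
  case True thus ?thesis using h1 h2 CC_left CC_cancel by blast
next
  case ac: False
  show ?thesis
  proof (cases "c = b")
    case True thus ?thesis using h1 h2 CC_right CC_cancel by blast
  next
    case cb: False
    have canc: "\<And>c X' Y'. length X' < n \<Longrightarrow> peq (c # X') (c # Y') \<Longrightarrow> peq X' Y'"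
      using IH CC_cancel by blast
    have h1': "(far a c \<and> (\<exists>Z. peq X (c # Z) \<and> peq V (a # Z))) \<or>
        (adj a c \<and> (\<exists>Z. peq X (c # a # Z) \<and> peq V (a # c # Z)))"
      using h1 ac unfolding CC_def by blast
    have h2': "(far c b \<and> (\<exists>Z. peq V (b # Z) \<and> peq Y (c # Z))) \<or>
        (adj c b \<and> (\<exists>Z. peq V (b # c # Z) \<and> peq Y (c # b # Z)))"
      using h2 cb unfolding CC_def by blast
    from h1' show ?thesis
    proof
      assume "far a c \<and> (\<exists>Z. peq X (c # Z) \<and> peq V (a # Z))"
      then obtain Z1 where fac: "far a c" and x1: "peq X (c # Z1)" and v1: "peq V (a # Z1)" by blast
      have lZ1: "length Z1 < n" using peq_length[OF x1] lX by simp
      from h2' show ?thesis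
      proof
        assume "far c b \<and> (\<exists>Z. peq V (b # Z) \<and> peq Y (c # Z))"
        then obtain Z2 where fcb: "far c b" and v2: "peq V (b # Z2)" and y2: "peq Y (c # Z2)" by blast
        have "peq (a # Z1) (b # Z2)" using v1 v2 peq_sym peq_trans by blast
        hence cc: "CC a b Z1 Z2" using IH lZ1 by blast
        show ?thesis
        proof (cases "a = b")
          case True
          hence "peq Z1 Z2" using cc CC_cancel by blast
          hence "peq X Y" using x1 y2 pc1 peq_sym peq_trans by meson
          thus ?thesis using True CC_I1 by blast
        next
          case F: False
          from far_or_adj[of a b] F fac fcb have "far a b \<or> adj a b" by (auto simp: far_def)
          thus ?thesis
          proof
            assume fab: "far a b"
            then obtain R where z1: "peq Z1 (b # R)" and z2: "peq Z2 (a # R)" using CC_far cc by blast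
            have "peq X (c # Z1)" by (fact x1)
            also have "peq \<dots> (c # b # R)" using z1 by (rule pc1)
            also have "peq \<dots> (b # c # R)" using fcb by (rule pf)
            finally have X: "peq X (b # c # R)" .
            have "peq Y (c # Z2)" by (fact y2)
            also have "peq \<dots> (c # a # R)" using z2 by (rule pc1)
            also have "peq \<dots> (a # c # R)" using far_sym[OF fac] by (rule pf)
            finally have Y: "peq Y (a # c # R)" .
            show ?thesis using fab X Y by (rule CC_If)
          next
            assume aab: "adj a b"
            then obtain R where z1: "peq Z1 (b # a # R)" and z2: "peq Z2 (a # b # R)" using CC_adj cc by blast
            have "peq X (c # Z1)" by (fact x1)
            also have "peq \<dots> (c # b # a # R)" using z1 by (rule pc1)
            also have "peq \<dots> (b # c # a # R)" using fcb by (rule pf)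
            also have "peq \<dots> (b # a # c # R)" using far_sym[OF fac] by (rule pf1)
            finally have X: "peq X (b # a # c # R)" .
            have "peq Y (c # Z2)" by (fact y2)
            also have "peq \<dots> (c # a # b # R)" using z2 by (rule pc1)
            also have "peq \<dots> (a # c # b # R)" using far_sym[OF fac] by (rule pf)
            also have "peq \<dots> (a # b # c # R)" using fcb by (rule pf1)
            finally have Y: "peq Y (a # b # c # R)" .
            show ?thesis using aab X Y by (rule CC_Ia)
          qed
        qed
      next
        assume "adj c b \<and> (\<exists>Z. peq V (b # c # Z) \<and> peq Y (c # b # Z))"
        then obtain Z2 where acb: "adj c b" and v2: "peq V (b # c # Z2)" and y2: "peq Y (c # b # Z2)" by blast
        have lZ2: "length Z2 < n" using peq_length[OF v2] peq_length[OF v1] lZ1 by simp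
        have "peq (a # Z1) (b # c # Z2)" using v1 v2 peq_sym peq_trans by blast
        hence cc: "CC a b Z1 (c # Z2)" using IH lZ1 by blast
        have F: "a \<noteq> b" using fac acb far_not_adj adj_sym by blast
        from far_or_adj[of a b] F fac acb have "far a b \<or> adj a b" by (auto simp: far_def adj_def)
        thus ?thesis
        proof
          assume fab: "far a b"
          then obtain R where z1: "peq Z1 (b # R)" and z2: "peq (c # Z2) (a # R)" using CC_far cc by blast
          have "CC c a Z2 R" using IH lZ2 z2 by blast
          then obtain R' where z2': "peq Z2 (a # R')" and r: "peq R (c # R')"
            using CC_far far_sym[OF fac] by blast
          have "peq X (c # Z1)" by (fact x1)
          also have "peq \<dots> (c # b # R)" using z1 by (rule pc1)
          also have "peq \<dots> (c # b # c # R')" using r by (rule pc2)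
          also have "peq \<dots> (b # c # b # R')" using acb by (rule pb)
          finally have X: "peq X (b # c # b # R')" .
          have "peq Y (c # b # Z2)" by (fact y2)
          also have "peq \<dots> (c # b # a # R')" using z2' by (rule pc2)
          also have "peq \<dots> (c # a # b # R')" using far_sym[OF fab] by (rule pf1)
          also have "peq \<dots> (a # c # b # R')" using far_sym[OF fac] by (rule pf)
          finally have Y: "peq Y (a # c # b # R')" .
          show ?thesis using fab X Y by (rule CC_If)
        next
          assume aab: "adj a b"
          then obtain R where z1: "peq Z1 (b # a # R)" and z2: "peq (c # Z2) (a # b # R)" using CC_adj cc by blast
          have "CC c a Z2 (b # R)" using IH lZ2 z2 by blast
          then obtain R' where z2': "peq Z2 (a # R')" and r: "peq (b # R) (c # R')"
            using CC_far far_sym[OF fac] by blast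
          have lR: "length R < n" using peq_length[OF z1] lZ1 by simp
          have "CC b c R R'" using IH lR r by blast
          then obtain R'' where r1: "peq R (c # b # R'')" and r2: "peq R' (b # c # R'')"
            using CC_adj adj_sym[OF acb] by blast
          have "peq X (c # Z1)" by (fact x1)
          also have "peq \<dots> (c # b # a # R)" using z1 by (rule pc1)
          also have "peq \<dots> (c # b # a # c # b # R'')" using r1 by (rule pc3)
          also have "peq \<dots> (c # b # c # a # b # R'')" using fac by (rule pf2)
          also have "peq \<dots> (b # c # b # a # b # R'')" using acb by (rule pb)
          also have "peq \<dots> (b # c # a # b # a # R'')" using adj_sym[OF aab] by (rule pb2)
          also have "peq \<dots> (b # a # c # b # a # R'')" using far_sym[OF fac] by (rule pf1)
          finally have X: "peq X (b # a # c # b # a # R'')" .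
          have "peq Y (c # b # Z2)" by (fact y2)
          also have "peq \<dots> (c # b # a # R')" using z2' by (rule pc2)
          also have "peq \<dots> (c # b # a # b # c # R'')" using r2 by (rule pc3)
          also have "peq \<dots> (c # a # b # a # c # R'')" using adj_sym[OF aab] by (rule pb1)
          also have "peq \<dots> (a # c # b # a # c # R'')" using far_sym[OF fac] by (rule pf)
          also have "peq \<dots> (a # c # b # c # a # R'')" using fac by (rule pf3)
          also have "peq \<dots> (a # b # c # b # a # R'')" using acb by (rule pb1)
          finally have Y: "peq Y (a # b # c # b # a # R'')" .
          show ?thesis using aab X Y by (rule CC_Ia)
        qed
      qed
    next
      assume "adj a c \<and> (\<exists>Z. peq X (c # a # Z) \<and> peq V (a # c # Z))"
      then obtain Z1 where aac: "adj a c" and x1: "peq X (c # a # Z1)" and v1: "peq V (a # c # Z1)" by blast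
      have lZ1: "length Z1 < n" using peq_length[OF x1] lX by simp
      have lcZ1: "length (c # Z1) < n" using peq_length[OF x1] lX by simp
      from h2' show ?thesis
      proof
        assume "far c b \<and> (\<exists>Z. peq V (b # Z) \<and> peq Y (c # Z))"
        then obtain Z2 where fcb: "far c b" and v2: "peq V (b # Z2)" and y2: "peq Y (c # Z2)" by blast
        have "peq (a # c # Z1) (b # Z2)" using v1 v2 peq_sym peq_trans by blast
        hence cc: "CC a b (c # Z1) Z2" using IH lcZ1 by blast
        have F: "a \<noteq> b" using aac fcb far_not_adj adj_sym by blast
        from far_or_adj[of a b] F aac fcb have "far a b \<or> adj a b" by (auto simp: far_def adj_def)
        thus ?thesis
        proof
          assume fab: "far a b"
          then obtain R where z1: "peq (c # Z1) (b # R)" and z2: "peq Z2 (a # R)" using CC_far cc by blast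
          have "CC c b Z1 R" using IH lZ1 z1 by blast
          then obtain R' where z1': "peq Z1 (b # R')" and r: "peq R (c # R')"
            using CC_far fcb by blast
          have "peq X (c # a # Z1)" by (fact x1)
          also have "peq \<dots> (c # a # b # R')" using z1' by (rule pc2)
          also have "peq \<dots> (c # b # a # R')" using fab by (rule pf1)
          also have "peq \<dots> (b # c # a # R')" using fcb by (rule pf)
          finally have X: "peq X (b # c # a # R')" .
          have "peq Y (c # Z2)" by (fact y2)
          also have "peq \<dots> (c # a # R)" using z2 by (rule pc1)
          also have "peq \<dots> (c # a # c # R')" using r by (rule pc2)
          also have "peq \<dots> (a # c # a # R')" using adj_sym[OF aac] by (rule pb)
          finally have Y: "peq Y (a # c # a # R')" .
          show ?thesis using fab X Y by (rule CC_If)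
        next
          assume aab: "adj a b"
          then obtain R where z1: "peq (c # Z1) (b # a # R)" and z2: "peq Z2 (a # b # R)" using CC_adj cc by blast
          have "CC c b Z1 (a # R)" using IH lZ1 z1 by blast
          then obtain R' where z1': "peq Z1 (b # R')" and r: "peq (a # R) (c # R')"
            using CC_far fcb by blast
          have lR: "length R < n" using peq_length[OF z1] lcZ1 by simp
          have "CC a c R R'" using IH lR r by blast
          then obtain R'' where r1: "peq R (c # a # R'')" and r2: "peq R' (a # c # R'')"
            using CC_adj aac by blast
          have "peq X (c # a # Z1)" by (fact x1)
          also have "peq \<dots> (c # a # b # R')" using z1' by (rule pc2)
          also have "peq \<dots> (c # a # b # a # c # R'')" using r2 by (rule pc3)
          also have "peq \<dots> (c # b # a # b # c # R'')" using aab by (rule pb1)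
          also have "peq \<dots> (b # c # a # b # c # R'')" using fcb by (rule pf)
          also have "peq \<dots> (b # c # a # c # b # R'')" using far_sym[OF fcb] by (rule pf3)
          also have "peq \<dots> (b # a # c # a # b # R'')" using adj_sym[OF aac] by (rule pb1)
          finally have X: "peq X (b # a # c # a # b # R'')" .
          have "peq Y (c # Z2)" by (fact y2)
          also have "peq \<dots> (c # a # b # R)" using z2 by (rule pc1)
          also have "peq \<dots> (c # a # b # c # a # R'')" using r1 by (rule pc3)
          also have "peq \<dots> (c # a # c # b # a # R'')" using far_sym[OF fcb] by (rule pf2)
          also have "peq \<dots> (a # c # a # b # a # R'')" using adj_sym[OF aac] by (rule pb)
          also have "peq \<dots> (a # c # b # a # b # R'')" using aab by (rule pb2)
          also have "peq \<dots> (a # b # c # a # b # R'')" using fcb by (rule pf1)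
          finally have Y: "peq Y (a # b # c # a # b # R'')" .
          show ?thesis using aab X Y by (rule CC_Ia)
        qed
      next
        assume "adj c b \<and> (\<exists>Z. peq V (b # c # Z) \<and> peq Y (c # b # Z))"
        then obtain Z2 where acb: "adj c b" and v2: "peq V (b # c # Z2)" and y2: "peq Y (c # b # Z2)" by blast
        have "peq (a # c # Z1) (b # c # Z2)" using v1 v2 peq_sym peq_trans by blast
        hence cc: "CC a b (c # Z1) (c # Z2)" using IH lcZ1 by blast
        show ?thesis
        proof (cases "a = b")
          case True
          hence "peq (c # Z1) (c # Z2)" using cc CC_cancel by blast
          hence "peq Z1 Z2" using canc lZ1 by blast
          hence "peq (c # a # Z1) (c # b # Z2)" using True by (simp add: pc2)
          hence "peq X Y" using x1 y2 peq_sym peq_trans by meson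
          thus ?thesis using True CC_I1 by blast
        next
          case False
          hence fab: "far a b" using adj_adj_far aac acb by blast
          then obtain R where z1: "peq (c # Z1) (b # R)" and z2: "peq (c # Z2) (a # R)"
            using CC_far cc by blast
          have lZ2: "length Z2 < n" using peq_length[OF v1] peq_length[OF v2] lZ1 by simp
          have "CC c b Z1 R" using IH lZ1 z1 by blast
          then obtain R1 where z1': "peq Z1 (b # c # R1)" and r1: "peq R (c # b # R1)"
            using CC_adj acb by blast
          have "CC c a Z2 R" using IH lZ2 z2 by blast
          then obtain R2 where z2': "peq Z2 (a # c # R2)" and r2: "peq R (c # a # R2)"
            using CC_adj adj_sym[OF aac] by blast
          have lR: "length (b # R1) < n" using peq_length[OF z1'] lZ1 by simp
          have "peq (c # b # R1) (c # a # R2)" using r1 r2 peq_sym peq_trans by blast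
          hence "peq (b # R1) (a # R2)" using canc lR by blast
          moreover have "length R1 < n" using lR by simp
          ultimately have "CC b a R1 R2" using IH by blast
          then obtain R3 where r1': "peq R1 (a # R3)" and r2': "peq R2 (b # R3)"
            using CC_far far_sym[OF fab] by blast
          have "peq X (c # a # Z1)" by (fact x1)
          also have "peq \<dots> (c # a # b # c # R1)" using z1' by (rule pc2)
          also have "peq \<dots> (c # a # b # c # a # R3)" using r1' by (intro peq_Cons)
          also have "peq \<dots> (c # b # a # c # a # R3)" using fab by (rule pf1)
          also have "peq \<dots> (c # b # c # a # c # R3)" using aac by (rule pb2)
          also have "peq \<dots> (b # c # b # a # c # R3)" using acb by (rule pb)
          finally have X: "peq X (b # c # b # a # c # R3)" .
          have "peq Y (c # b # Z2)" by (fact y2)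
          also have "peq \<dots> (c # b # a # c # R2)" using z2' by (rule pc2)
          also have "peq \<dots> (c # b # a # c # b # R3)" using r2' by (intro peq_Cons)
          also have "peq \<dots> (c # a # b # c # b # R3)" using far_sym[OF fab] by (rule pf1)
          also have "peq \<dots> (c # a # c # b # c # R3)" using adj_sym[OF acb] by (rule pb2)
          also have "peq \<dots> (a # c # a # b # c # R3)" using adj_sym[OF aac] by (rule pb)
          also have "peq \<dots> (a # c # b # a # c # R3)" using fab by (rule pf2)
          finally have Y1: "peq Y (a # c # b # a # c # R3)" .
          have "peq (c # b # a # c # R3) (c # a # b # c # R3)" using far_sym[OF fab] by (rule pf1)
          hence "peq (a # c # b # a # c # R3) (a # c # a # b # c # R3)" by (rule pc1)
          have Y: "peq Y (a # c # b # a # c # R3)" by (fact Y1)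
          have X': "peq X (b # c # b # a # c # R3)" by (fact X)
          have "peq (c # b # a # c # R3) (c # b # a # c # R3)" by simp
          show ?thesis using fab X' Y by (rule CC_If)
        qed
      qed
    qed
  qed
qed

theorem CL: "peq (a # X) (b # Y) \<Longrightarrow> CC a b X Y"
proof (induction "length X" arbitrary: a b X Y rule: less_induct)
  case less
  have IH: "\<And>X' Y' a b. length X' < length X \<Longrightarrow> peq (a # X') (b # Y') \<Longrightarrow> CC a b X' Y'"
    using less.hyps by blast
  have "\<And>W. peq (a # X) W \<Longrightarrow> (\<forall>c V. W = c # V \<longrightarrow> CC a c X V)"
  proof -
    fix W assume "peq (a # X) W"
    then show "\<forall>c V. W = c # V \<longrightarrow> CC a c X V"
    proof (induction rule: rtranclp_induct)
      case base show ?case by (auto simp: CC_def)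
    next
      case (step W W')
      show ?case
      proof (intro allI impI)
        fix c' V' assume W': "W' = c' # V'"
        have "length W = length W'" using step.hyps(2) step_length by blast
        then obtain c V where W: "W = c # V" using W' by (cases W) auto
        have "CC a c X V" using step.IH W by blast
        moreover have "CC c c' V V'" using step_first step.hyps(2) W W' by blast
        ultimately show "CC a c' X V'" using compose[OF IH] by blast
      qed
    qed
  qed
  thus ?case using less.prems by blast
qed

lemma cancel1: "peq (c # X) (c # Y) \<Longrightarrow> peq X Y"
  using CL CC_cancel by blast

lemma cancel: "peq (w @ X) (w @ Y) \<Longrightarrow> peq X Y"
  by (induction w) (auto dest: cancel1)

section \<open>Words, permutations and reduced words\<close>

definition pwm :: "nat list \<Rightarrow> nat list" where
  "pwm w = foldl (\<lambda>p i. sw5 i p) idp w"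

lemma len5: "length p = 5 \<Longrightarrow> \<exists>a b c d e. p = [a,b,c,d,e]"
  by (cases p; cases "tl p"; cases "tl (tl p)"; cases "tl (tl (tl p))"; cases "tl (tl (tl (tl p)))") auto

lemma sw5_len: "length (sw5 i p) = length p"
  by (cases "(i,p)" rule: sw5.cases) auto

lemma sw5_out: "\<not> (1 \<le> i \<and> i \<le> 4) \<Longrightarrow> sw5 i p = p"
  by (cases "(i,p)" rule: sw5.cases) auto

lemma sw5_set: "set (sw5 i p) = set p"
  by (cases "(i,p)" rule: sw5.cases) auto

lemma sw5_distinct: "distinct (sw5 i p) = distinct p"
  by (cases "(i,p)" rule: sw5.cases) auto

lemma isp_len: "isp p \<Longrightarrow> length p = 5"
proof -
  assume h: "isp p"
  hence "card (set p) = length p" unfolding isp_def by (metis distinct_card)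
  moreover have "card (set p) = 5" using h unfolding isp_def by simp
  ultimately show ?thesis by simp
qed

lemma isp_sw5: "isp p \<Longrightarrow> isp (sw5 i p)"
  unfolding isp_def using sw5_set sw5_distinct by simp

lemma isp_idp: "isp idp" by (simp add: isp_def idp_def)

lemma pwm_snoc: "pwm (w @ [i]) = sw5 i (pwm w)"
  by (simp add: pwm_def)

lemma pwm_Nil: "pwm [] = idp" by (simp add: pwm_def)

lemma isp_pwm: "isp (pwm w)"
  by (induction w rule: rev_induct) (auto simp: pwm_snoc pwm_Nil isp_idp isp_sw5)

lemma len_pwm: "length (pwm w) = 5"
  using isp_len isp_pwm by blast

lemma sw5_comp: "length p = 5 \<Longrightarrow> sw5 i p = pcomp p (sw5 i idp)"
  by (drule len5) (auto simp: pcomp_def idp_def)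

lemma comp_assoc: "\<forall>x\<in>set r. x < length q \<Longrightarrow> pcomp (pcomp p q) r = pcomp p (pcomp q r)"
  by (auto simp: pcomp_def)

lemma len_pcomp: "length (pcomp p q) = length q" by (simp add: pcomp_def)

lemma comp_idp: "length p = 5 \<Longrightarrow> pcomp p idp = p"
  by (drule len5) (auto simp: pcomp_def idp_def)

lemma set_sw5_idp: "set (sw5 i idp) = {0,1,2,3,4}"
  unfolding sw5_set by (simp add: idp_def)

lemma pwm_append: "pwm (u @ v) = pcomp (pwm u) (pwm v)"
proof (induction v rule: rev_induct)
  case Nil thus ?case by (simp add: pwm_Nil comp_idp len_pwm)
next
  case (snoc i v)
  have "pwm (u @ v @ [i]) = sw5 i (pwm (u @ v))" using pwm_snoc[of "u @ v"] by simp
  also have "\<dots> = pcomp (pwm (u @ v)) (sw5 i idp)" by (rule sw5_comp[OF len_pwm])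
  also have "\<dots> = pcomp (pcomp (pwm u) (pwm v)) (sw5 i idp)" by (simp add: snoc)
  also have "\<dots> = pcomp (pwm u) (pcomp (pwm v) (sw5 i idp))"
    by (rule comp_assoc) (simp add: set_sw5_idp len_pwm)
  also have "\<dots> = pcomp (pwm u) (pwm (v @ [i]))" by (simp add: pwm_snoc sw5_comp len_pwm)
  finally show ?case by simp
qed

lemma comp_lsw: "set q \<subseteq> {0,1,2,3,4} \<Longrightarrow> pcomp (sw5 a idp) q = lsw a q"
proof -
  assume q: "set q \<subseteq> {0,1,2,3,4}"
  show ?thesis
  proof (cases "1 \<le> a \<and> a \<le> 4")
    case True
    hence "a = 1 \<or> a = 2 \<or> a = 3 \<or> a = 4" by auto
    thus ?thesis using q by (auto simp: pcomp_def lsw_def idp_def intro!: map_cong)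
  next
    case False thus ?thesis using q by (auto simp: pcomp_def lsw_def idp_def sw5_out intro!: map_idI)
  qed
qed

lemma pwm_Cons: "pwm (a # u) = lsw a (pwm u)"
proof -
  have "pwm (a # u) = pcomp (pwm [a]) (pwm u)" using pwm_append[of "[a]" u] by simp
  also have "pwm [a] = sw5 a idp" by (simp add: pwm_def)
  finally show ?thesis using comp_lsw isp_pwm[of u] by (simp add: isp_def)
qed

lemma lsw_lsw: "lsw a (lsw a q) = q"
  by (auto simp: lsw_def intro!: map_idI)

lemma la4: "list_all P [1,2,3,4] \<Longrightarrow> 1 \<le> (i::nat) \<Longrightarrow> i \<le> 4 \<Longrightarrow> P i"
proof -
  assume "list_all P [1,2,3,4]" "1 \<le> i" "i \<le> 4"
  moreover have "i = 1 \<or> i = 2 \<or> i = 3 \<or> i = 4" using \<open>1 \<le> i\<close> \<open>i \<le> 4\<close> by auto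
  ultimately show ?thesis by auto
qed

lemma FF1': "isp p \<Longrightarrow> inv5 (sw5 i p) \<le> inv5 p + 1 \<and> inv5 p \<le> inv5 (sw5 i p) + 1"
proof (cases "1 \<le> i \<and> i \<le> 4")
  case True assume "isp p" thus ?thesis using la4[OF P5_all[OF FF1] ] True by blast
next
  case False thus ?thesis by (simp add: sw5_out)
qed

lemma lsw_out: "\<not> (1 \<le> i \<and> i \<le> 4) \<Longrightarrow> lsw i p = p" unfolding lsw_def by auto

lemma FF1L': "isp p \<Longrightarrow> inv5 (lsw i p) \<le> inv5 p + 1 \<and> inv5 p \<le> inv5 (lsw i p) + 1"
proof (cases "1 \<le> i \<and> i \<le> 4")
  case True assume "isp p" thus ?thesis using la4[OF P5_all[OF FF1L] ] True by blast
next
  case False thus ?thesis by (simp add: lsw_out)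
qed

lemma FF2': "isp p \<Longrightarrow> 1 \<le> a \<Longrightarrow> a \<le> 4 \<Longrightarrow> 1 \<le> b \<Longrightarrow> b \<le> 4 \<Longrightarrow> a \<noteq> b \<Longrightarrow> inS a p \<Longrightarrow> inS b p \<Longrightarrow>
   inS a (lsw b p) \<and> ((b = a + 1 \<or> a = b + 1) \<longrightarrow> inS b (lsw a (lsw b p)))"
  using la4[OF la4[OF P5_all[OF FF2]], of p a b] by blast

lemma FF3': "isp p \<Longrightarrow> (\<And>a. 1 \<le> a \<Longrightarrow> a \<le> 4 \<Longrightarrow> inS a p) \<Longrightarrow> p = w0"
  using P5_all[OF FF3, of p] by auto

lemma FF4': "isp p \<Longrightarrow> p \<noteq> w0 \<Longrightarrow> \<exists>j. 1 \<le> j \<and> j \<le> 4 \<and> inv5 (sw5 j p) = inv5 p + 1"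
proof -
  assume "isp p" "p \<noteq> w0"
  hence "list_ex (\<lambda>j. inv5 (sw5 j p) = inv5 p + 1) [1,2,3,4]" using P5_all[OF FF4, of p] by auto
  then obtain j where "j \<in> set [1,2,3,4::nat]" "inv5 (sw5 j p) = inv5 p + 1" by (auto simp: list_ex_iff)
  moreover hence "1 \<le> j \<and> j \<le> 4" by auto
  ultimately show ?thesis by blast
qed

lemma FF5': "isp p \<Longrightarrow> inv5 p \<le> 10 \<and> (inv5 p = 0 \<longrightarrow> p = idp)"
  using P5_all[OF FF5] by blast

lemma FF0': "1 \<le> i \<Longrightarrow> i \<le> 4 \<Longrightarrow> \<not> inS i idp \<and> jn idp i = sw5 i idp \<and> inv5 (sw5 i idp) = 1"
  using la4[OF FF0] by blast

lemma FFJ1': "isp p \<Longrightarrow> 1 \<le> i \<Longrightarrow> i \<le> 4 \<Longrightarrow> \<not> inS i p \<Longrightarrow> jn p i \<noteq> p"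
  using la4[OF P5_all[OF FFJ1], of p i] by blast

lemma FFJ2': assumes "isp p" "1 \<le> i" "i \<le> 4" "1 \<le> a" "a \<le> 4" "a \<noteq> i" "inS a p" "\<not> inS i p"
  shows "(a + 2 \<le> i \<or> i + 2 \<le> a) \<longrightarrow> jn p i = lsw a (jn (lsw a p) i) \<and> inv5 (jn p i) = inv5 (jn (lsw a p) i) + 1"
    and "\<not> (a + 2 \<le> i \<or> i + 2 \<le> a) \<longrightarrow> inS i (jn (lsw a p) i) \<and>
           jn p i = lsw a (lsw i (jn (lsw i (jn (lsw a p) i)) a)) \<and>
           inv5 (jn p i) = inv5 (jn (lsw i (jn (lsw a p) i)) a) + 2"
proof -
  have "cP p (filter (\<lambda>a. inS a p) [1,2,3,4])" using P5_all[OF FFJ2] assms(1) by blast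
  hence "(\<lambda>i. if i \<in> set (filter (\<lambda>a. inS a p) [1,2,3,4]) then True else
      list_all (\<lambda>a. if a = i then True else if a \<in> set (filter (\<lambda>a. inS a p) [1,2,3,4])
         then cJ p i a (jn (lsw a p) i) (jn p i) else True) [1,2,3,4]) i"
    unfolding cP_def using la4 assms(2,3) by blast
  hence "list_all (\<lambda>a. if a = i then True else if a \<in> set (filter (\<lambda>a. inS a p) [1,2,3,4])
         then cJ p i a (jn (lsw a p) i) (jn p i) else True) [1,2,3,4]" using assms(8) by auto
  hence "(\<lambda>a. if a = i then True else if a \<in> set (filter (\<lambda>a. inS a p) [1,2,3,4])
         then cJ p i a (jn (lsw a p) i) (jn p i) else True) a" using la4 assms(4,5) by blast
  moreover have "a \<in> set (filter (\<lambda>a. inS a p) [1,2,3,4])"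
  proof -
    have "a = 1 \<or> a = 2 \<or> a = 3 \<or> a = 4" using assms(4,5) by auto
    thus ?thesis using assms(7) by auto
  qed
  ultimately have "cJ p i a (jn (lsw a p) i) (jn p i)" using assms(6) by auto
  thus "(a + 2 \<le> i \<or> i + 2 \<le> a) \<longrightarrow> jn p i = lsw a (jn (lsw a p) i) \<and> inv5 (jn p i) = inv5 (jn (lsw a p) i) + 1"
    and "\<not> (a + 2 \<le> i \<or> i + 2 \<le> a) \<longrightarrow> inS i (jn (lsw a p) i) \<and>
           jn p i = lsw a (lsw i (jn (lsw i (jn (lsw a p) i)) a)) \<and>
           inv5 (jn p i) = inv5 (jn (lsw i (jn (lsw a p) i)) a) + 2"
    unfolding cJ_def cJ2_def by auto
qed

lemma pwm_far: "far i j \<Longrightarrow> pwm [i,j] = pwm [j,i]"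
proof -
  assume "far i j"
  hence "(i = 1 \<or> i = 2 \<or> i = 3 \<or> i = 4) \<and> (j = 1 \<or> j = 2 \<or> j = 3 \<or> j = 4) \<and> (i + 2 \<le> j \<or> j + 2 \<le> i)"
    by (auto simp: far_def)
  thus ?thesis by (auto simp: pwm_def idp_def)
qed

lemma pwm_adj: "adj i j \<Longrightarrow> pwm [i,j,i] = pwm [j,i,j]"
proof -
  assume "adj i j"
  hence "(i = 1 \<or> i = 2 \<or> i = 3 \<or> i = 4) \<and> (j = i + 1 \<or> i = j + 1) \<and> (j = 1 \<or> j = 2 \<or> j = 3 \<or> j = 4)"
    by (auto simp: adj_def)
  thus ?thesis by (auto simp: pwm_def idp_def)
qed

lemma pwm_step: "step u v \<Longrightarrow> pwm u = pwm v"
proof (induction rule: step.induct)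
  case (sf i j xs ys)
  thus ?case using pwm_far[OF sf] pwm_append[of xs "[i,j] @ ys"] pwm_append[of xs "[j,i] @ ys"]
      pwm_append[of "[i,j]" ys] pwm_append[of "[j,i]" ys] by simp
next
  case (sb i j xs ys)
  thus ?case using pwm_adj[OF sb] pwm_append[of xs "[i,j,i] @ ys"] pwm_append[of xs "[j,i,j] @ ys"]
      pwm_append[of "[i,j,i]" ys] pwm_append[of "[j,i,j]" ys] by simp
qed

lemma pwm_peq: "peq u v \<Longrightarrow> pwm u = pwm v"
  by (induction rule: rtranclp_induct) (auto dest: pwm_step)

lemma inv_snoc: "inv5 (pwm (w @ [i])) \<le> inv5 (pwm w) + 1"
  using FF1'[OF isp_pwm] by (simp add: pwm_snoc)

lemma inv_Cons: "inv5 (pwm (a # w)) \<le> inv5 (pwm w) + 1 \<and> inv5 (pwm w) \<le> inv5 (pwm (a # w)) + 1"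
  using FF1L'[OF isp_pwm] by (simp add: pwm_Cons)

lemma inv_app: "inv5 (pwm (u @ v)) \<le> inv5 (pwm u) + length v"
proof (induction v rule: rev_induct)
  case Nil thus ?case by simp
next
  case (snoc i v) thus ?case using inv_snoc[of "u @ v" i] by simp
qed

lemma inv_appL: "inv5 (pwm (u @ v)) \<le> length u + inv5 (pwm v)"
proof (induction u)
  case Nil thus ?case by simp
next
  case (Cons a u) thus ?case using inv_Cons[of a "u @ v"] by simp
qed

lemma inv_le: "inv5 (pwm w) \<le> length w"
  using inv_app[of "[]" w] by (simp add: pwm_Nil idp_def)

definition red :: "nat list \<Rightarrow> bool" where "red w \<longleftrightarrow> inv5 (pwm w) = length w"

lemma red_peq: "peq u v \<Longrightarrow> red u \<Longrightarrow> red v"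
  unfolding red_def using pwm_peq peq_length by metis

lemma red_appL: "red (u @ v) \<Longrightarrow> red u"
  unfolding red_def using inv_app[of u v] inv_le[of u] by simp

lemma red_appR: "red (u @ v) \<Longrightarrow> red v"
  unfolding red_def using inv_appL[of u v] inv_le[of v] by simp

lemma red_Cons: assumes "red (a # u)" shows "red u" "inS a (pwm (a # u))" "1 \<le> a" "a \<le> 4"
proof -
  show "red u" using red_appR[of "[a]" u] assms by simp
  have e: "lsw a (pwm (a # u)) = pwm u" by (simp add: pwm_Cons lsw_lsw)
  have "inv5 (pwm u) < inv5 (pwm (a # u))" using assms inv_le[of u] by (simp add: red_def)
  thus "inS a (pwm (a # u))" unfolding inS_def e .
  show "1 \<le> a" "a \<le> 4" using \<open>inv5 (pwm u) < inv5 (pwm (a # u))\<close> lsw_out[of a "pwm u"] pwm_Cons[of a u]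
    by fastforce+
qed

lemma red_Nil: "red []" by (simp add: red_def pwm_Nil idp_def)

definition Dw :: "nat list" where "Dw = [1,2,3,4,1,2,3,1,2,1]"

lemma pwm_Dw: "pwm Dw = w0" by (simp add: pwm_def idp_def w0_def Dw_def)
lemma inv_w0: "inv5 w0 = 10" by (simp add: w0_def)
lemma len_Dw: "length Dw = 10" by (simp add: Dw_def)
lemma red_Dw: "red Dw" by (simp add: red_def pwm_Dw inv_w0 len_Dw)

lemma exch: "red W \<Longrightarrow> inS a (pwm W) \<Longrightarrow> 1 \<le> a \<Longrightarrow> a \<le> 4 \<Longrightarrow> \<exists>U. peq W (a # U)"
proof (induction "length W" arbitrary: W a rule: less_induct)
  case less
  show ?case
  proof (cases W)
    case Nil thus ?thesis using less.prems FF0' by (simp add: pwm_Nil)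
  next
    case (Cons b U)
    have rU: "red U" and bS: "inS b (pwm W)" and b1: "1 \<le> b" and b4: "b \<le> 4"
      using red_Cons less.prems(1) Cons by auto
    show ?thesis
    proof (cases "b = a")
      case True thus ?thesis using Cons by blast
    next
      case False
      have pW: "pwm W = lsw b (pwm U)" using Cons pwm_Cons by simp
      have ff: "inS a (lsw b (pwm W)) \<and> ((b = a + 1 \<or> a = b + 1) \<longrightarrow> inS b (lsw a (lsw b (pwm W))))"
        using FF2'[OF isp_pwm less.prems(3,4) b1 b4] False less.prems(2) bS by auto
      have e: "lsw b (pwm W) = pwm U" using pW lsw_lsw by simp
      have aU: "inS a (pwm U)" using ff e by simp
      obtain U1 where u1: "peq U (a # U1)" using less.hyps[of U a] rU aU less.prems(3,4) Cons by auto
      have "far b a \<or> adj b a" using far_or_adj[of b a] b1 b4 less.prems(3,4) False by auto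
      thus ?thesis
      proof
        assume fba: "far b a"
        have "peq W (b # a # U1)" using Cons u1 peq_Cons by simp
        also have "peq \<dots> (a # b # U1)" using fba by (rule pf)
        finally show ?thesis by blast
      next
        assume aba: "adj b a"
        have "inS b (lsw a (pwm U))" using ff e aba by (auto simp: adj_def)
        moreover have "lsw a (pwm U) = pwm U1" using pwm_peq[OF u1] pwm_Cons[of a U1] lsw_lsw by simp
        ultimately have bU1: "inS b (pwm U1)" by simp
        have rU1: "red U1" using red_Cons(1) red_peq[OF u1 rU] by blast
        have "length U1 < length W" using peq_length[OF u1] Cons by simp
        then obtain U2 where u2: "peq U1 (b # U2)" using less.hyps[of U1 b] rU1 bU1 b1 b4 by blast
        have "peq W (b # a # U1)" using Cons u1 peq_Cons by simp
        also have "peq \<dots> (b # a # b # U2)" using u2 by (rule pc2)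
        also have "peq \<dots> (a # b # a # U2)" using aba by (rule pb)
        finally show ?thesis by blast
      qed
    qed
  qed
qed

lemma mats: "red W \<Longrightarrow> red W' \<Longrightarrow> pwm W = pwm W' \<Longrightarrow> peq W W'"
proof (induction "length W" arbitrary: W W' rule: less_induct)
  case less
  show ?case
  proof (cases W)
    case Nil
    hence "pwm W' = idp" using less.prems by (simp add: pwm_Nil)
    hence "length W' = 0" using less.prems(2) unfolding red_def by (simp add: idp_def)
    thus ?thesis using Nil by simp
  next
    case (Cons a U)
    have rU: "red U" and aS: "inS a (pwm W)" and a1: "1 \<le> a" and a4: "a \<le> 4"
      using red_Cons less.prems(1) Cons by auto
    obtain U' where u': "peq W' (a # U')" using exch[OF less.prems(2)] aS less.prems(3) a1 a4 by auto
    have rU': "red U'" using red_Cons(1) red_peq[OF u' less.prems(2)] by blast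
    have "pwm U' = lsw a (pwm W')" using pwm_peq[OF u'] pwm_Cons[of a U'] lsw_lsw by simp
    also have "\<dots> = lsw a (lsw a (pwm U))" using less.prems(3) Cons pwm_Cons[of a U] by simp
    also have "\<dots> = pwm U" by (rule lsw_lsw)
    finally have "peq U U'" using less.hyps[of U U'] Cons rU rU' by simp
    hence "peq W (a # U')" using Cons peq_Cons by simp
    thus ?thesis using u' peq_sym peq_trans by blast
  qed
qed

definition simp_m :: "nat list \<Rightarrow> bool" where "simp_m W \<longleftrightarrow> (\<exists>Z. peq (W @ Z) Dw)"

lemma simp_red: "simp_m W \<Longrightarrow> red W"
proof -
  assume "simp_m W"
  then obtain Z where z: "peq (W @ Z) Dw" by (auto simp: simp_m_def)
  have "pwm (W @ Z) = w0" using pwm_peq[OF z] pwm_Dw by simp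
  moreover have "length W + length Z = 10" using peq_length[OF z] len_Dw by simp
  ultimately show ?thesis using inv_app[of W Z] inv_le[of W] inv_w0 by (simp add: red_def)
qed

lemma red_simp: "red W \<Longrightarrow> simp_m W"
proof (induction "10 - length W" arbitrary: W rule: less_induct)
  case less
  show ?case
  proof (cases "pwm W = w0")
    case True
    hence "peq W Dw" using mats[OF less.prems red_Dw] pwm_Dw by simp
    thus ?thesis unfolding simp_m_def by (metis append_Nil2)
  next
    case False
    then obtain j where j: "1 \<le> j" "j \<le> 4" "inv5 (sw5 j (pwm W)) = inv5 (pwm W) + 1"
      using FF4'[OF isp_pwm] by blast
    have r: "red (W @ [j])" using less.prems j by (simp add: red_def pwm_snoc)
    have "length (W @ [j]) \<le> 10" using r FF5'[OF isp_pwm[of "W @ [j]"]] by (simp add: red_def)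
    hence "10 - length (W @ [j]) < 10 - length W" by simp
    then obtain Z where "peq (W @ [j] @ Z) Dw" using less.hyps r unfolding simp_m_def by fastforce
    thus ?thesis unfolding simp_m_def by (metis append_Cons append_Nil)
  qed
qed

lemma simp_m_peq: "peq U W \<Longrightarrow> simp_m W \<Longrightarrow> simp_m U"
  unfolding simp_m_def by (meson peq_appr peq_trans)

lemma Jlem: "red W \<Longrightarrow> peq M (W @ Y) \<Longrightarrow> peq M (i # Z) \<Longrightarrow> 1 \<le> i \<Longrightarrow> i \<le> 4 \<Longrightarrow>
  \<exists>u Y' v. red u \<and> pwm u = jn (pwm W) i \<and> peq M (u @ Y') \<and> peq u (W @ v)"
proof (induction "length M" arbitrary: M W Y Z i rule: less_induct)
  case less
  note rW = less.prems(1) and mW = less.prems(2) and mZ = less.prems(3) and i1 = less.prems(4) and i4 = less.prems(5)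
  show ?case
  proof (cases "inS i (pwm W)")
    case True
    hence "jn (pwm W) i = pwm W" by (simp add: jn_def)
    hence "red W \<and> pwm W = jn (pwm W) i \<and> peq M (W @ Y) \<and> peq W (W @ [])" using rW mW by simp
    thus ?thesis by blast
  next
    case niS: False
    show ?thesis
    proof (cases W)
      case Nil
      have "pwm [i] = sw5 i idp" by (simp add: pwm_def)
      hence "red [i]" "pwm [i] = jn (pwm W) i" using FF0'[OF i1 i4] Nil by (auto simp: red_def pwm_Nil)
      moreover have "peq M ([i] @ Z)" using mZ by simp
      moreover have "peq [i] (W @ [i])" using Nil by simp
      ultimately show ?thesis by blast
    next
      case (Cons a W')
      have rW': "red W'" and aS: "inS a (pwm W)" and a1: "1 \<le> a" and a4: "a \<le> 4"
        using red_Cons rW Cons by auto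
      have ai: "a \<noteq> i" using aS niS by blast
      have pW': "pwm W' = lsw a (pwm W)" using Cons pwm_Cons[of a W'] lsw_lsw by simp
      have "peq (a # (W' @ Y)) M" using peq_sym[OF mW] Cons by simp
      hence "peq (a # (W' @ Y)) (i # Z)" using mZ by (rule peq_trans)
      hence cc: "CC a i (W' @ Y) Z" by (rule CL)
      have lM: "length (W' @ Y) < length M" using peq_length[OF mW] Cons by simp
      have "far a i \<or> adj a i" using far_or_adj[of a i] a1 a4 i1 i4 ai by auto
      thus ?thesis
      proof
        assume fai: "far a i"
        then obtain Wx where w1: "peq (W' @ Y) (i # Wx)" using CC_far cc by blast
        obtain u' Y1 v' where u': "red u'" "pwm u' = jn (pwm W') i" "peq (W' @ Y) (u' @ Y1)" "peq u' (W' @ v')"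
          using less.hyps[OF lM rW' _ w1 i1 i4] by blast
        have fc: "a + 2 \<le> i \<or> i + 2 \<le> a" using fai by (auto simp: far_def)
        have J: "jn (pwm W) i = lsw a (jn (lsw a (pwm W)) i) \<and> inv5 (jn (pwm W) i) = inv5 (jn (lsw a (pwm W)) i) + 1"
          using FFJ2'(1)[OF isp_pwm i1 i4 a1 a4 ai aS niS] fc by blast
        have p: "pwm (a # u') = jn (pwm W) i" using J u'(2) pW' pwm_Cons by simp
        have "inv5 (pwm (a # u')) = inv5 (jn (pwm W) i)" using p by simp
        also have "\<dots> = inv5 (jn (lsw a (pwm W)) i) + 1" using J by blast
        also have "\<dots> = length (a # u')" using u'(1,2) pW' by (simp add: red_def)
        finally have r: "red (a # u')" by (simp add: red_def)
        have "peq M (a # (W' @ Y))" using mW Cons by simp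
        also have "peq \<dots> (a # (u' @ Y1))" using u'(3) by (rule pc1)
        finally have m: "peq M ((a # u') @ Y1)" by simp
        have "peq (a # u') (W @ v')" using u'(4) Cons peq_Cons by simp
        thus ?thesis using p r m by blast
      next
        assume aai: "adj a i"
        then obtain Wx where w1: "peq (W' @ Y) (i # a # Wx)" using CC_adj cc by blast
        obtain u' Y1 v' where u': "red u'" "pwm u' = jn (pwm W') i" "peq (W' @ Y) (u' @ Y1)" "peq u' (W' @ v')"
          using less.hyps[OF lM rW' _ w1 i1 i4] by blast
        have fc: "\<not> (a + 2 \<le> i \<or> i + 2 \<le> a)" using aai by (auto simp: adj_def)
        have J: "inS i (jn (lsw a (pwm W)) i) \<and>
           jn (pwm W) i = lsw a (lsw i (jn (lsw i (jn (lsw a (pwm W)) i)) a)) \<and>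
           inv5 (jn (pwm W) i) = inv5 (jn (lsw i (jn (lsw a (pwm W)) i)) a) + 2"
          using FFJ2'(2)[OF isp_pwm i1 i4 a1 a4 ai aS niS] fc by blast
        have "inS i (pwm u')" using J u'(2) pW' by simp
        then obtain u'' where u'': "peq u' (i # u'')" using exch[OF u'(1)] i1 i4 by blast
        have ru'': "red u''" using red_Cons(1) red_peq[OF u'' u'(1)] by blast
        have pu'': "pwm u'' = lsw i (pwm u')" using pwm_peq[OF u''] pwm_Cons[of i u''] lsw_lsw by simp
        have "peq (i # (u'' @ Y1)) (u' @ Y1)" using peq_sym[OF peq_appr[OF u'', of Y1]] by simp
        also have "peq \<dots> (W' @ Y)" using peq_sym[OF u'(3)] .
        also have "peq \<dots> (i # a # Wx)" by (fact w1)
        finally have m2: "peq (u'' @ Y1) (a # Wx)" by (rule cancel1)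
        have lM2: "length (u'' @ Y1) < length M"
          using peq_length[OF u'(3)] peq_length[OF u''] lM by simp
        obtain u3 Y2 v3 where u3: "red u3" "pwm u3 = jn (pwm u'') a" "peq (u'' @ Y1) (u3 @ Y2)" "peq u3 (u'' @ v3)"
          using less.hyps[OF lM2 ru'' _ m2 a1 a4] by blast
        have p: "pwm (a # i # u3) = jn (pwm W) i" using J u3(2) pu'' u'(2) pW' pwm_Cons by simp
        have "inv5 (pwm (a # i # u3)) = inv5 (jn (pwm W) i)" using p by simp
        also have "\<dots> = inv5 (jn (lsw i (jn (lsw a (pwm W)) i)) a) + 2" using J by blast
        also have "\<dots> = length (a # i # u3)" using u3(1,2) pu'' u'(2) pW' by (simp add: red_def)
        finally have r: "red (a # i # u3)" by (simp add: red_def)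
        have "peq M (a # (W' @ Y))" using mW Cons by simp
        also have "peq \<dots> (a # (u' @ Y1))" using u'(3) by (rule pc1)
        also have "peq \<dots> (a # (i # u'' @ Y1))" using peq_appr[OF u''] by (simp add: pc1)
        also have "peq \<dots> (a # i # (u3 @ Y2))" using u3(3) by (simp add: pc2)
        finally have m: "peq M ((a # i # u3) @ Y2)" by simp
        have "peq (a # i # u3) (a # i # u'' @ v3)" using u3(4) by (rule pc2)
        also have "peq \<dots> (a # (u' @ v3))" using peq_sym[OF peq_appr[OF u'', of v3]] by (simp add: pc1)
        also have "peq \<dots> (a # (W' @ v' @ v3))" using peq_appr[OF u'(4), of v3] by (simp add: pc1)
        finally have "peq (a # i # u3) (W @ (v' @ v3))" using Cons by simp
        thus ?thesis using p r m by blast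
      qed
    qed
  qed
qed

definition good :: "nat list \<Rightarrow> bool" where
  "good W \<longleftrightarrow> simp_m W \<and> W \<noteq> [] \<and> \<not> peq W Dw"
definition LW :: "nat list \<Rightarrow> nat list \<Rightarrow> bool" where
  "LW W1 W2 \<longleftrightarrow> (\<forall>m Z y. peq W2 (m # Z) \<longrightarrow> \<not> peq (W1 @ m # y) Dw)"

fun chain :: "nat list list \<Rightarrow> bool" where
  "chain [] = True"
| "chain [W] = good W"
| "chain (W1 # W2 # Ws) = (good W1 \<and> LW W1 W2 \<and> chain (W2 # Ws))"

lemma chain_good: "chain (W # Ws) \<Longrightarrow> good W" by (cases Ws) auto
lemma chain_tl: "chain (W # Ws) \<Longrightarrow> chain Ws" by (cases Ws) auto

lemma greedy: "chain (W # Ws) \<Longrightarrow> peq (W @ concat Ws) (i # Z) \<Longrightarrow> \<exists>Z'. peq W (i # Z')"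
proof (induction Ws arbitrary: W i Z)
  case Nil thus ?case by auto
next
  case (Cons W2 Ws)
  have gW: "good W" using chain_good Cons.prems(1) by blast
  hence rW: "red W" and ne: "W \<noteq> []" using simp_red by (auto simp: good_def)
  show ?case
  proof (rule ccontr)
    assume nP: "\<not> (\<exists>Z'. peq W (i # Z'))"
    obtain a W1 where W: "W = a # W1" using ne by (cases W) auto
    have ai: "a \<noteq> i" using nP W by blast
    have "peq (a # (W1 @ concat (W2 # Ws))) (i # Z)" using Cons.prems(2) W by simp
    hence "CC a i (W1 @ concat (W2 # Ws)) Z" by (rule CL)
    hence "far a i \<or> adj a i" using ai unfolding CC_def by blast
    hence i1: "1 \<le> i" and i4: "i \<le> 4" by (auto simp: far_def adj_def)
    have niS: "\<not> inS i (pwm W)" using exch[OF rW _ i1 i4] nP by blast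
    obtain u Y' v where u: "red u" "pwm u = jn (pwm W) i" "peq (W @ concat (W2 # Ws)) (u @ Y')" "peq u (W @ v)"
      using Jlem[OF rW _ Cons.prems(2) i1 i4] by blast
    have "v \<noteq> []"
    proof
      assume "v = []"
      hence "pwm u = pwm W" using pwm_peq[OF u(4)] by simp
      thus False using u(2) FFJ1'[OF isp_pwm i1 i4 niS] by simp
    qed
    then obtain j v' where v: "v = j # v'" by (cases v) auto
    have "peq (W @ concat (W2 # Ws)) (W @ (j # v' @ Y'))" using u(3) peq_appr[OF u(4), of Y'] v peq_trans by fastforce
    hence c: "peq (W2 @ concat Ws) (j # v' @ Y')" using cancel by fastforce
    obtain Z2 where z2: "peq W2 (j # Z2)" using Cons.IH[OF chain_tl[OF Cons.prems(1)] c] by blast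
    obtain Z3 where z3: "peq (u @ Z3) Dw" using red_simp[OF u(1)] by (auto simp: simp_m_def)
    have "peq (W @ j # (v' @ Z3)) (u @ Z3)" using peq_sym[OF peq_appr[OF u(4), of Z3]] v by simp
    hence "peq (W @ j # (v' @ Z3)) Dw" using z3 by (rule peq_trans)
    moreover have "LW W W2" using Cons.prems(1) by (cases Ws) auto
    ultimately show False using z2 unfolding LW_def by blast
  qed
qed

lemma inS_w0: "1 \<le> i \<Longrightarrow> i \<le> 4 \<Longrightarrow> inS i w0"
proof -
  assume "1 \<le> i" "i \<le> 4"
  hence "i = 1 \<or> i = 2 \<or> i = 3 \<or> i = 4" by auto
  thus ?thesis by (auto simp: inS_def lsw_def w0_def)
qed

lemma Dw_pref: "1 \<le> i \<Longrightarrow> i \<le> 4 \<Longrightarrow> \<exists>X. peq Dw (i # X)"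
  using exch[OF red_Dw] inS_w0 pwm_Dw by simp

lemma noDelta: "chain Ws \<Longrightarrow> \<not> peq (concat Ws) (Dw @ Y)"
proof
  assume ch: "chain Ws" and h: "peq (concat Ws) (Dw @ Y)"
  show False
  proof (cases Ws)
    case Nil thus False using peq_length[OF h] len_Dw by simp
  next
    case (Cons W Ws')
    have gW: "good W" using chain_good ch Cons by blast
    hence rW: "red W" using simp_red by (auto simp: good_def)
    have "\<And>a. 1 \<le> a \<Longrightarrow> a \<le> 4 \<Longrightarrow> inS a (pwm W)"
    proof -
      fix a :: nat assume a: "1 \<le> a" "a \<le> 4"
      obtain X where "peq Dw (a # X)" using Dw_pref a by blast
      hence "peq (W @ concat Ws') (a # X @ Y)" using h Cons peq_appr[of Dw "a # X" Y] peq_trans by fastforce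
      then obtain Z' where z: "peq W (a # Z')" using greedy ch Cons by blast
      have "red (a # Z')" using red_peq[OF z rW] .
      thus "inS a (pwm W)" using red_Cons(2) pwm_peq[OF z] by simp
    qed
    hence "pwm W = w0" using FF3'[OF isp_pwm] by blast
    hence "peq W Dw" using mats[OF rW red_Dw] pwm_Dw by simp
    thus False using gW by (simp add: good_def)
  qed
qed

definition tau :: "nat list \<Rightarrow> nat list" where "tau w = map (\<lambda>i. 5 - i) w"
definition inr4 :: "nat list \<Rightarrow> bool" where "inr4 w \<longleftrightarrow> set w \<subseteq> {1,2,3,4}"
definition taun :: "nat \<Rightarrow> nat list \<Rightarrow> nat list" where "taun k w = (if even k then w else tau w)"
definition dpow :: "nat \<Rightarrow> nat list" where "dpow k = concat (replicate k Dw)"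

lemma tau_app: "tau (u @ v) = tau u @ tau v" by (simp add: tau_def)
lemma tau_Cons: "tau (a # v) = (5 - a) # tau v" by (simp add: tau_def)
lemma tau_Nil: "tau [] = []" by (simp add: tau_def)
lemma inr4_app: "inr4 (u @ v) \<longleftrightarrow> inr4 u \<and> inr4 v" by (auto simp: inr4_def)
lemma tau_tau: "inr4 w \<Longrightarrow> tau (tau w) = w"
  by (auto simp: tau_def inr4_def intro!: map_idI)
lemma inr4_tau: "inr4 w \<Longrightarrow> inr4 (tau w)" by (auto simp: tau_def inr4_def)
lemma len_tau: "length (tau w) = length w" by (simp add: tau_def)

lemma far_tau: "far i j \<Longrightarrow> far (5 - i) (5 - j)" by (auto simp: far_def)
lemma adj_tau: "adj i j \<Longrightarrow> adj (5 - i) (5 - j)" by (auto simp: adj_def)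

lemma step_tau: "step u v \<Longrightarrow> step (tau u) (tau v)"
proof (induction rule: step.induct)
  case (sf i j xs ys) thus ?case using step.sf[OF far_tau[OF sf], of "tau xs" "tau ys"] by (simp add: tau_def)
next
  case (sb i j xs ys) thus ?case using step.sb[OF adj_tau[OF sb], of "tau xs" "tau ys"] by (simp add: tau_def)
qed

lemma peq_tau: "peq u v \<Longrightarrow> peq (tau u) (tau v)"
  by (induction rule: rtranclp_induct) (auto intro: rtranclp.rtrancl_into_rtrancl step_tau)

lemma step_set: "step u v \<Longrightarrow> set u = set v"
  by (induction rule: step.induct) auto
lemma peq_set: "peq u v \<Longrightarrow> set u = set v"
  by (induction rule: rtranclp_induct) (auto dest: step_set)
lemma peq_inr4: "peq u v \<Longrightarrow> inr4 u \<Longrightarrow> inr4 v" using peq_set by (auto simp: inr4_def)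

lemma red_inr4: "red w \<Longrightarrow> inr4 w"
proof (induction w)
  case Nil thus ?case by (simp add: inr4_def)
next
  case (Cons a w)
  have "red w" "1 \<le> a" "a \<le> 4" using red_Cons Cons.prems by auto
  moreover hence "a = 1 \<or> a = 2 \<or> a = 3 \<or> a = 4" by auto
  ultimately show ?case using Cons.IH by (auto simp: inr4_def)
qed

lemma simp_inr4: "simp_m w \<Longrightarrow> inr4 w" using simp_red red_inr4 by blast

lemma tauDw: "peq (tau Dw) Dw"
proof -
  have "red (tau Dw)" "pwm (tau Dw) = pwm Dw"
    by (simp_all add: red_def tau_def Dw_def pwm_def idp_def)
  thus ?thesis using mats red_Dw by blast
qed

lemma inr4_Dw: "inr4 Dw" by (simp add: inr4_def Dw_def)

lemma Dw_comm1: assumes "1 \<le> i" "i \<le> 4" shows "peq (Dw @ [i]) ((5 - i) # Dw)"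
proof -
  have i5: "1 \<le> 5 - i" "5 - i \<le> 4" using assms by auto
  obtain X where x: "peq Dw ((5 - i) # X)" using Dw_pref[OF i5] by blast
  have rX: "red X" using red_Cons(1) red_peq[OF x red_Dw] by blast
  have pX: "pwm X = lsw (5 - i) w0" using pwm_peq[OF x] pwm_Cons[of "5 - i" X] lsw_lsw pwm_Dw by metis
  have "i = 1 \<or> i = 2 \<or> i = 3 \<or> i = 4" using assms by auto
  hence pXi: "pwm (X @ [i]) = w0" using pX by (auto simp: pwm_snoc lsw_def w0_def)
  have "length X = 9" using peq_length[OF x] len_Dw by simp
  hence "red (X @ [i])" using pXi inv_w0 by (simp add: red_def)
  hence "peq (X @ [i]) Dw" using mats red_Dw pXi pwm_Dw by simp
  have "peq (Dw @ [i]) ((5 - i) # X @ [i])" using peq_appr[OF x, of "[i]"] by simp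
  also have "peq \<dots> ((5 - i) # Dw)" using \<open>peq (X @ [i]) Dw\<close> by (rule pc1)
  finally show ?thesis .
qed

lemma Dw_comm: "inr4 X \<Longrightarrow> peq (Dw @ X) (tau X @ Dw)"
proof (induction X)
  case Nil thus ?case by (simp add: tau_def)
next
  case (Cons i X)
  have i: "1 \<le> i" "i \<le> 4" and iX: "inr4 X" using Cons.prems by (auto simp: inr4_def)
  have "peq (Dw @ i # X) ((Dw @ [i]) @ X)" by simp
  also have "peq \<dots> (((5 - i) # Dw) @ X)" using Dw_comm1[OF i] by (rule peq_appr)
  also have "peq \<dots> ((5 - i) # tau X @ Dw)" using Cons.IH[OF iX] by (simp add: pc1)
  finally show ?case by (simp add: tau_def)
qed

lemma taun_Suc: "inr4 X \<Longrightarrow> tau (taun k X) = taun (Suc k) X"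
  by (simp add: taun_def tau_tau)
lemma inr4_taun: "inr4 X \<Longrightarrow> inr4 (taun k X)" by (simp add: taun_def inr4_tau)
lemma taun_taun: "inr4 X \<Longrightarrow> taun k (taun k X) = X" by (simp add: taun_def tau_tau)

lemma dpow_Suc: "dpow (Suc k) = Dw @ dpow k" by (simp add: dpow_def)
lemma dpow_Suc': "dpow (Suc k) = dpow k @ Dw" by (simp add: dpow_def replicate_append_same[symmetric])
lemma dpow_add: "dpow (a + b) = dpow a @ dpow b" by (simp add: dpow_def replicate_add)
lemma inr4_dpow: "inr4 (dpow k)" by (induction k) (auto simp: dpow_def inr4_def Dw_def)
lemma len_dpow: "length (dpow k) = 10 * k" unfolding dpow_def by (induction k) (auto simp: len_Dw)

lemma dpow_comm: "inr4 X \<Longrightarrow> peq (dpow k @ X) (taun k X @ dpow k)"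
proof (induction k)
  case 0 thus ?case unfolding dpow_def taun_def by simp
next
  case (Suc k)
  have "peq (dpow (Suc k) @ X) (Dw @ (dpow k @ X))" by (simp add: dpow_Suc)
  also have "peq \<dots> (Dw @ (taun k X @ dpow k))" using Suc.IH[OF Suc.prems] by (rule peq_appl)
  also have "peq \<dots> (tau (taun k X) @ Dw @ dpow k)"
    using peq_appr[OF Dw_comm[OF inr4_taun[OF Suc.prems, of k]], where z = "dpow k"] by simp
  finally show ?case using taun_Suc[OF Suc.prems] by (simp add: dpow_Suc)
qed

lemma tau_dpow: "peq (tau (dpow k)) (dpow k)"
proof (induction k)
  case 0 thus ?case by (simp add: dpow_def tau_def)
next
  case (Suc k) thus ?case using peq_app2[OF tauDw Suc.IH] by (simp add: dpow_Suc tau_app)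
qed

lemma taun_dpow: "peq (taun j (dpow k)) (dpow k)"
  using tau_dpow by (simp add: taun_def)

lemma good_inr4: "good w \<Longrightarrow> inr4 w" using simp_inr4 by (simp add: good_def)

lemma good_tau: assumes "good w" shows "good (tau w)"
proof -
  have iw: "inr4 w" using good_inr4 assms by blast
  obtain Z where z: "peq (w @ Z) Dw" using assms by (auto simp: good_def simp_m_def)
  have "peq (tau w @ tau Z) Dw" using peq_trans[OF peq_tau[OF z] tauDw] by (simp add: tau_app)
  hence s: "simp_m (tau w)" by (auto simp: simp_m_def)
  have "\<not> peq (tau w) Dw"
  proof
    assume "peq (tau w) Dw"
    hence "peq w Dw" using peq_trans[OF peq_tau[of "tau w" Dw] tauDw] tau_tau[OF iw] by simp
    thus False using assms by (simp add: good_def)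
  qed
  thus ?thesis using s assms by (auto simp: good_def tau_def)
qed

lemma LW_tau: assumes "LW a b" "inr4 a" "inr4 b" shows "LW (tau a) (tau b)"
  unfolding LW_def
proof (intro allI impI notI)
  fix m Z y assume h1: "peq (tau b) (m # Z)" and h2: "peq (tau a @ m # y) Dw"
  have "peq b ((5 - m) # tau Z)" using peq_tau[OF h1] tau_tau[OF assms(3)] by (simp add: tau_Cons)
  moreover have "peq (a @ (5 - m) # tau y) Dw"
    using peq_trans[OF peq_tau[OF h2] tauDw] tau_tau[OF assms(2)] by (simp add: tau_app tau_Cons)
  ultimately show False using assms(1) unfolding LW_def by blast
qed

lemma chain_Cons: "chain (W # Ws) \<longleftrightarrow> good W \<and> (Ws \<noteq> [] \<longrightarrow> LW W (hd Ws)) \<and> chain Ws"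
  by (cases Ws) auto

lemma chain_inr4: "chain Ws \<Longrightarrow> W \<in> set Ws \<Longrightarrow> inr4 W"
  by (induction Ws rule: chain.induct) (auto intro: good_inr4)

lemma chain_tau: "chain Ws \<Longrightarrow> chain (map tau Ws)"
proof (induction Ws rule: chain.induct)
  case 1 thus ?case by simp
next
  case (2 W) thus ?case using good_tau by simp
next
  case (3 W1 W2 Ws)
  hence "good W1" "LW W1 W2" "good W2" "chain (map tau (W2 # Ws))" using chain_good by auto
  thus ?case by (simp add: good_tau LW_tau good_inr4)
qed

lemma chain_snoc: "chain (Xs @ [W]) \<longleftrightarrow> chain Xs \<and> good W \<and> (Xs \<noteq> [] \<longrightarrow> LW (last Xs) W)"
proof (induction Xs rule: chain.induct)
  case 1 thus ?case by simp
next
  case (2 W') thus ?case by auto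
next
  case (3 W1 W2 Ws) thus ?case by auto
qed

definition cw :: "nat list \<Rightarrow> nat list" where "cw W = (SOME c. peq (W @ c) Dw)"

lemma cw1: "good W \<Longrightarrow> peq (W @ cw W) Dw"
  unfolding cw_def good_def simp_m_def by (rule someI_ex) blast

lemma cw2: assumes "good W" shows "peq (cw W @ tau W) Dw"
proof -
  have iW: "inr4 W" using good_inr4 assms by blast
  have "peq (W @ (cw W @ tau W)) (Dw @ tau W)" using peq_appr[OF cw1[OF assms], of "tau W"] by simp
  also have "peq \<dots> (tau (tau W) @ Dw)" using Dw_comm[OF inr4_tau[OF iW]] .
  finally have "peq (W @ (cw W @ tau W)) (W @ Dw)" using tau_tau[OF iW] by simp
  thus ?thesis by (rule cancel)
qed

lemma good_cw: assumes "good W" shows "good (cw W)"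
proof -
  have s: "simp_m (cw W)" using cw2[OF assms] by (auto simp: simp_m_def)
  have l: "length W + length (cw W) = 10" using peq_length[OF cw1[OF assms]] len_Dw by simp
  have "cw W \<noteq> []"
  proof
    assume "cw W = []" thus False using cw1[OF assms] assms by (simp add: good_def)
  qed
  moreover have "\<not> peq (cw W) Dw"
  proof
    assume "peq (cw W) Dw"
    hence "length (cw W) = 10" using peq_length[OF \<open>peq (cw W) Dw\<close>] len_Dw by simp
    thus False using l assms by (simp add: good_def)
  qed
  ultimately show ?thesis using s by (simp add: good_def)
qed

lemma LW_cw: assumes "LW W1 W2" "good W1" "good W2" shows "LW (cw W2) (tau (cw W1))"
  unfolding LW_def
proof (intro allI impI notI)
  fix m Z y assume h1: "peq (tau (cw W1)) (m # Z)" and h2: "peq (cw W2 @ m # y) Dw"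
  have i1: "inr4 (cw W1)" using good_inr4 good_cw assms(2) by blast
  have i2: "inr4 W2" using good_inr4 assms(3) by blast
  have "peq (cw W2 @ m # y) (cw W2 @ tau W2)" using h2 peq_sym[OF cw2[OF assms(3)]] by (rule peq_trans)
  hence "peq (m # y) (tau W2)" by (rule cancel)
  hence "peq (tau W2) (m # y)" by (rule peq_sym)
  hence "peq (tau (tau W2)) ((5 - m) # tau y)" using peq_tau by (fastforce simp: tau_Cons)
  hence w2: "peq W2 ((5 - m) # tau y)" using tau_tau[OF i2] by simp
  have "peq (cw W1) ((5 - m) # tau Z)" using peq_tau[OF h1] tau_tau[OF i1] by (simp add: tau_Cons)
  hence "peq (W1 @ (5 - m) # tau Z) (W1 @ cw W1)" using peq_appl[OF peq_sym] by blast
  hence "peq (W1 @ (5 - m) # tau Z) Dw" using cw1[OF assms(2)] by (rule peq_trans)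
  thus False using w2 assms(1) unfolding LW_def by blast
qed

fun zs :: "nat list list \<Rightarrow> nat list list" where
  "zs [] = []"
| "zs (W # Ws) = cw W # map tau (zs Ws)"

lemma concat_map_tau: "concat (map tau L) = tau (concat L)"
  by (induction L) (auto simp: tau_app tau_Nil)

lemma chain_all_good: "chain Ws \<Longrightarrow> W \<in> set Ws \<Longrightarrow> good W"
  by (induction Ws rule: chain.induct) auto

lemma inr4_concat: "(\<And>W. W \<in> set L \<Longrightarrow> inr4 W) \<Longrightarrow> inr4 (concat L)"
  by (induction L) (auto simp: inr4_def)

lemma chain_concat_inr4: "chain L \<Longrightarrow> inr4 (concat L)"
  using inr4_concat chain_inr4 by blast

lemma zs_main: "chain (rev R) \<Longrightarrow> chain (zs R) \<and> peq (concat (rev R) @ concat (zs R)) (dpow (length R))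
   \<and> length (zs R) = length R \<and> (R \<noteq> [] \<longrightarrow> hd (zs R) = cw (hd R))"
proof (induction R)
  case Nil thus ?case by (simp add: dpow_def)
next
  case (Cons W R')
  have ch: "chain (rev R')" "good W" "R' \<noteq> [] \<longrightarrow> LW (hd R') W"
    using Cons.prems chain_snoc[of "rev R'" W] by (auto simp: last_rev)
  note IH = Cons.IH[OF ch(1)]
  have c1: "chain (zs (W # R'))"
    unfolding zs.simps chain_Cons
  proof (intro conjI impI)
    show "good (cw W)" using good_cw ch(2) by blast
    show "chain (map tau (zs R'))" using chain_tau IH by blast
    assume "map tau (zs R') \<noteq> []"
    hence ne: "R' \<noteq> []" by auto
    have "hd (map tau (zs R')) = tau (cw (hd R'))" using IH ne by (cases "zs R'") auto
    moreover have "good (hd R')" using chain_all_good[OF ch(1)] ne by simp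
    ultimately show "LW (cw W) (hd (map tau (zs R')))" using LW_cw ch ne by simp
  qed
  have iz: "inr4 (concat (zs R'))" using chain_concat_inr4 IH by blast
  have "peq (concat (rev (W # R')) @ concat (zs (W # R')))
            (concat (rev R') @ (W @ cw W) @ tau (concat (zs R')))"
    by (simp add: concat_map_tau)
  also have "peq \<dots> (concat (rev R') @ Dw @ tau (concat (zs R')))"
    using peq_app[OF cw1[OF ch(2)], of "concat (rev R')" "tau (concat (zs R'))"] by simp
  also have "peq \<dots> (concat (rev R') @ tau (tau (concat (zs R'))) @ Dw)"
    using peq_appl[OF Dw_comm[OF inr4_tau[OF iz]]] by simp
  also have "\<dots> = (concat (rev R') @ concat (zs R')) @ Dw" using tau_tau[OF iz] by simp
  also have "peq \<dots> (dpow (length R') @ Dw)" using IH peq_appr by blast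
  finally have c2: "peq (concat (rev (W # R')) @ concat (zs (W # R'))) (dpow (length (W # R')))"
    by (simp add: dpow_Suc')
  show ?case using c1 c2 IH by simp
qed

lemma inf_unique: "chain X \<Longrightarrow> chain Y \<Longrightarrow> peq (dpow k @ concat X) (concat Y) \<Longrightarrow> k = 0"
proof (rule ccontr)
  assume "chain X" "chain Y" and h: "peq (dpow k @ concat X) (concat Y)" and "k \<noteq> 0"
  then obtain k' where "k = Suc k'" by (cases k) auto
  hence "peq (concat Y) (Dw @ (dpow k' @ concat X))" using peq_sym[OF h] by (simp add: dpow_Suc)
  thus False using noDelta \<open>chain Y\<close> by blast
qed

lemma len_le: assumes cX: "chain X" and cY: "chain Y" and h: "peq (concat X) (concat Y)"
  shows "length Y \<le> length X"
proof (rule ccontr)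
  assume "\<not> length Y \<le> length X"
  define d where "d = length Y - length X - 1"
  have d: "length Y = length X + Suc d" using \<open>\<not> length Y \<le> length X\<close> d_def by simp
  have zX: "chain (zs (rev X)) \<and> peq (concat X @ concat (zs (rev X))) (dpow (length X))"
    using zs_main[of "rev X"] cX by simp
  have zY: "chain (zs (rev Y)) \<and> peq (concat Y @ concat (zs (rev Y))) (dpow (length Y))"
    using zs_main[of "rev Y"] cY by simp
  define zx where "zx = concat (zs (rev X))"
  define zy where "zy = concat (zs (rev Y))"
  have izx: "inr4 zx" using zX chain_concat_inr4 zx_def by blast
  have e: "dpow (length X) @ dpow (Suc d) = dpow (length Y)" using d dpow_add[of "length X" "Suc d"] by simp
  have "peq (concat Y @ zy) (dpow (length X) @ dpow (Suc d))" using zY zy_def e by simp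
  also have "peq \<dots> ((concat X @ zx) @ dpow (Suc d))" using peq_appr[OF peq_sym[OF conjunct2[OF zX]]] zx_def by simp
  also have "peq \<dots> ((concat Y @ zx) @ dpow (Suc d))" using peq_appr[OF peq_appr[OF h]] by blast
  finally have "peq (concat Y @ zy) (concat Y @ (zx @ dpow (Suc d)))" by simp
  hence "peq zy (zx @ dpow (Suc d))" by (rule cancel)
  also have "\<dots> = taun (Suc d) (taun (Suc d) zx) @ dpow (Suc d)" using taun_taun[OF izx] by simp
  also have "peq \<dots> (dpow (Suc d) @ taun (Suc d) zx)"
    using peq_sym[OF dpow_comm[OF inr4_taun[OF izx]]] .
  finally have "peq zy (Dw @ (dpow d @ taun (Suc d) zx))" by (simp add: dpow_Suc)
  thus False using noDelta zY zy_def by blast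
qed

lemma sup_unique: "chain X \<Longrightarrow> chain Y \<Longrightarrow> peq (concat X) (concat Y) \<Longrightarrow> length X = length Y"
  using len_le peq_sym by (meson le_antisym)

section \<open>Group level\<close>

definition P :: "nat list \<Rightarrow> bword" where "P w = map (\<lambda>i. (i, True)) w"

lemma P_app: "P (u @ v) = P u @ P v" by (simp add: P_def)
lemma P_Cons: "P (a # u) = (a, True) # P u" by (simp add: P_def)
lemma P_Nil: "P [] = []" by (simp add: P_def)

lemma bq_app: "bequiv u u' \<Longrightarrow> bequiv v v' \<Longrightarrow> bequiv (u @ v) (u' @ v')"
proof -
  assume a: "bequiv u u'" and b: "bequiv v v'"
  have "bequiv ([] @ u @ v) ([] @ u' @ v)" using bequiv.ctx[OF a] .
  moreover have "bequiv (u' @ v @ []) (u' @ v' @ [])" using bequiv.ctx[OF b] .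
  ultimately show ?thesis using bequiv.trans by simp
qed

lemma bq_appl: "bequiv v v' \<Longrightarrow> bequiv (u @ v) (u @ v')" using bq_app bequiv.refl by blast
lemma bq_appr: "bequiv u u' \<Longrightarrow> bequiv (u @ v) (u' @ v)" using bq_app bequiv.refl by blast

lemma step_bq: "step u v \<Longrightarrow> bequiv (P u) (P v)"
proof (induction rule: step.induct)
  case (sf i j xs ys)
  have "bequiv [(i, True), (j, True)] [(j, True), (i, True)]"
  proof (cases "i + 2 \<le> j")
    case True thus ?thesis using sf by (auto simp: far_def intro: bequiv.far_comm)
  next
    case False thus ?thesis using sf bequiv.sym[OF bequiv.far_comm[of j i]] by (auto simp: far_def)
  qed
  from bequiv.ctx[OF this, of "P xs" "P ys"] show ?case by (simp add: P_def)
next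
  case (sb i j xs ys)
  have "bequiv [(i, True), (j, True), (i, True)] [(j, True), (i, True), (j, True)]"
  proof (cases "j = i + 1")
    case True thus ?thesis using sb bequiv.braid_rel[of i] by (auto simp: adj_def)
  next
    case False
    hence "i = j + 1" using sb by (auto simp: adj_def)
    thus ?thesis using sb bequiv.braid_rel[of j] bequiv.sym by (auto simp: adj_def)
  qed
  from bequiv.ctx[OF this, of "P xs" "P ys"] show ?case by (simp add: P_def)
qed

lemma peq_bq: "peq u v \<Longrightarrow> bequiv (P u) (P v)"
  by (induction rule: rtranclp_induct) (auto intro: bequiv.refl bequiv.trans step_bq)

definition inrw :: "bword \<Rightarrow> bool" where "inrw w \<longleftrightarrow> (\<forall>l\<in>set w. 1 \<le> fst l \<and> fst l \<le> 4)"

lemma inrw_app: "inrw (u @ v) \<longleftrightarrow> inrw u \<and> inrw v" by (auto simp: inrw_def)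
lemma inrw_P: "inr4 w \<Longrightarrow> inrw (P w)" by (auto simp: inrw_def inr4_def P_def)

lemma bq_cancel1: "bequiv (w @ winv w) []" if "inrw w"
  using that
proof (induction w)
  case Nil thus ?case by (simp add: winv_def bequiv.refl)
next
  case (Cons l w)
  obtain i e where l: "l = (i, e)" by (cases l)
  have i: "i \<in> {1..4}" using Cons.prems l by (auto simp: inrw_def)
  have iw: "inrw w" using Cons.prems by (simp add: inrw_def)
  have "bequiv ([l] @ (w @ winv w) @ [(i, \<not> e)]) ([l] @ [] @ [(i, \<not> e)])"
    by (rule bequiv.ctx[OF Cons.IH[OF iw]])
  moreover have "bequiv [(i, e), (i, \<not> e)] []" using bequiv.cancel[OF i] .
  ultimately show ?case using l bequiv.trans by (auto simp: winv_def)
qed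

lemma bq_cancel2: "bequiv (winv w @ w) []" if "inrw w"
  using that
proof (induction w rule: rev_induct)
  case Nil thus ?case by (simp add: winv_def bequiv.refl)
next
  case (snoc l w)
  obtain i e where l: "l = (i, e)" by (cases l)
  have i: "i \<in> {1..4}" using snoc.prems l by (auto simp: inrw_def)
  have iw: "inrw w" using snoc.prems by (simp add: inrw_def)
  have "bequiv ([(i, \<not> e)] @ (winv w @ w) @ [l]) ([(i, \<not> e)] @ [] @ [l])"
    by (rule bequiv.ctx[OF snoc.IH[OF iw]])
  moreover have "bequiv [(i, \<not> e), (i, \<not> \<not> e)] []" using bequiv.cancel[OF i] .
  ultimately show ?case using l bequiv.trans by (auto simp: winv_def)
qed

definition oor :: "nat \<times> bool \<Rightarrow> bool" where "oor l \<longleftrightarrow> \<not> (1 \<le> fst l \<and> fst l \<le> 4)"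

lemma bq_filter: "bequiv u v \<Longrightarrow> filter oor u = filter oor v"
  by (induction rule: bequiv.induct) (auto simp: oor_def)

lemma inrw_filter: "inrw w \<longleftrightarrow> filter oor w = []"
  by (auto simp: inrw_def oor_def filter_empty_conv)

lemma bq_inrw: "bequiv u v \<Longrightarrow> inrw v \<Longrightarrow> inrw u"
  using bq_filter inrw_filter by metis

lemma winv_app: "winv (u @ v) = winv v @ winv u" by (simp add: winv_def)
lemma winv_winv: "winv (winv w) = w" unfolding winv_def by (induction w) auto
lemma inrw_winv: "inrw (winv w) \<longleftrightarrow> inrw w" by (auto simp: inrw_def winv_def)

lemma Delta_P: "Delta = P Dw" by (simp add: Delta_def sig_def P_def Dw_def)

definition Xi :: "nat \<Rightarrow> nat list" where
  "Xi i = (if i = 1 then [2,3,4,1,2,3,1,2,1] else if i = 2 then [1,2,3,4,2,3,1,2,1]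
           else if i = 3 then [1,2,3,4,1,2,3,2,1] else [1,2,3,4,1,2,3,1,2])"

lemma Xi_props: assumes "1 \<le> i" "i \<le> 4"
  shows "peq (i # Xi i) Dw" "peq (tau (Xi i) @ [i]) Dw" "inr4 (Xi i)"
proof -
  have c: "i = 1 \<or> i = 2 \<or> i = 3 \<or> i = 4" using assms by auto
  have "red (i # Xi i) \<and> pwm (i # Xi i) = pwm Dw" using c
    by (auto simp: Xi_def red_def pwm_def idp_def Dw_def)
  thus "peq (i # Xi i) Dw" using mats red_Dw by blast
  have "red (tau (Xi i) @ [i]) \<and> pwm (tau (Xi i) @ [i]) = pwm Dw" using c
    by (auto simp: Xi_def red_def pwm_def idp_def Dw_def tau_def)
  thus "peq (tau (Xi i) @ [i]) Dw" using mats red_Dw by blast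
  show "inr4 (Xi i)" using c by (auto simp: Xi_def inr4_def)
qed

definition nstep :: "nat list \<Rightarrow> nat \<times> bool \<Rightarrow> nat list" where
  "nstep acc l = (if 1 \<le> fst l \<and> fst l \<le> 4 then (if snd l then acc @ [fst l] else tau (acc @ Xi (fst l))) else acc)"
definition Nw :: "bword \<Rightarrow> nat list" where "Nw w = foldl nstep [] w"
definition mneg :: "bword \<Rightarrow> nat" where "mneg w = length (filter (\<lambda>l. 1 \<le> fst l \<and> fst l \<le> 4 \<and> \<not> snd l) w)"

lemma Nw_snoc: "Nw (w @ [l]) = nstep (Nw w) l" by (simp add: Nw_def)
lemma Nw_Nil: "Nw [] = []" by (simp add: Nw_def)

lemma inr4_Nw: "inr4 (Nw w)"
proof (induction w rule: rev_induct)
  case Nil thus ?case by (simp add: Nw_def inr4_def)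
next
  case (snoc l w)
  show ?case
  proof (cases "1 \<le> fst l \<and> fst l \<le> 4")
    case True
    hence "inr4 [fst l]" "inr4 (Xi (fst l))" using Xi_props(3)[of "fst l"] by (auto simp: inr4_def)
    thus ?thesis using snoc inr4_tau[of "Nw w @ Xi (fst l)"] by (auto simp: Nw_snoc nstep_def inr4_app)
  next
    case False
    hence "Nw (w @ [l]) = Nw w" by (auto simp: Nw_snoc nstep_def)
    thus ?thesis using snoc by simp
  qed
qed

lemma taun_app: "taun k (u @ v) = taun k u @ taun k v" by (simp add: taun_def tau_app)
lemma taun_add: "inr4 X \<Longrightarrow> taun j (taun k X) = taun (j + k) X"
  by (auto simp: taun_def tau_tau)
lemma peq_taun: "peq x y \<Longrightarrow> peq (taun k x) (taun k y)" by (simp add: taun_def peq_tau)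

lemma Nw_app: "Nw (u @ v) = taun (mneg v) (Nw u) @ Nw v"
proof (induction v rule: rev_induct)
  case Nil thus ?case by (simp add: Nw_Nil mneg_def taun_def)
next
  case (snoc l v)
  show ?case
  proof (cases "1 \<le> fst l \<and> fst l \<le> 4")
    case True
    show ?thesis
    proof (cases "snd l")
      case True
      hence "Nw (u @ v @ [l]) = Nw (u @ v) @ [fst l]" "Nw (v @ [l]) = Nw v @ [fst l]" "mneg (v @ [l]) = mneg v"
        using Nw_snoc[of "u @ v" l] \<open>1 \<le> fst l \<and> fst l \<le> 4\<close> by (auto simp: Nw_snoc nstep_def mneg_def)
      thus ?thesis using snoc by simp
    next
      case False
      have "Nw (u @ v @ [l]) = tau (Nw (u @ v) @ Xi (fst l))"
        using Nw_snoc[of "u @ v" l] False True by (simp add: nstep_def)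
      also have "\<dots> = tau (taun (mneg v) (Nw u)) @ tau (Nw v @ Xi (fst l))" by (simp add: snoc tau_app)
      also have "\<dots> = taun (Suc (mneg v)) (Nw u) @ tau (Nw v @ Xi (fst l))"
        using taun_Suc[OF inr4_Nw] by simp
      also have "Suc (mneg v) = mneg (v @ [l])" using False True by (simp add: mneg_def)
      also have "tau (Nw v @ Xi (fst l)) = Nw (v @ [l])" using False True by (simp add: Nw_snoc nstep_def)
      finally show ?thesis by simp
    qed
  next
    case False
    hence "Nw (u @ v @ [l]) = Nw (u @ v)" "Nw (v @ [l]) = Nw v" "mneg (v @ [l]) = mneg v"
      using Nw_snoc[of "u @ v" l] by (auto simp: Nw_snoc nstep_def mneg_def)
    thus ?thesis using snoc by simp
  qed
qed

lemma mneg_app: "mneg (u @ v) = mneg u + mneg v" by (simp add: mneg_def)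

definition II :: "bword \<Rightarrow> bword \<Rightarrow> bool" where
  "II u v \<longleftrightarrow> peq (dpow (mneg v) @ Nw u) (dpow (mneg u) @ Nw v)"

lemma dpow_commute: "dpow a @ dpow b = dpow b @ dpow a"
  by (metis dpow_add add.commute)

lemma II_trans: "II u v \<Longrightarrow> II v w \<Longrightarrow> II u w"
proof -
  assume a: "II u v" and b: "II v w"
  have e1: "dpow (mneg v) @ (dpow (mneg w) @ Nw u) = dpow (mneg w) @ (dpow (mneg v) @ Nw u)"
    by (metis append_assoc dpow_commute)
  have e2: "dpow (mneg w) @ (dpow (mneg u) @ Nw v) = dpow (mneg u) @ (dpow (mneg w) @ Nw v)"
    by (metis append_assoc dpow_commute)
  have e3: "dpow (mneg u) @ (dpow (mneg v) @ Nw w) = dpow (mneg v) @ (dpow (mneg u) @ Nw w)"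
    by (metis append_assoc dpow_commute)
  have "peq (dpow (mneg w) @ (dpow (mneg v) @ Nw u)) (dpow (mneg w) @ (dpow (mneg u) @ Nw v))"
    using a unfolding II_def by (rule peq_appl)
  hence "peq (dpow (mneg v) @ (dpow (mneg w) @ Nw u)) (dpow (mneg u) @ (dpow (mneg w) @ Nw v))"
    unfolding e1 e2 .
  moreover have "peq (dpow (mneg u) @ (dpow (mneg w) @ Nw v)) (dpow (mneg u) @ (dpow (mneg v) @ Nw w))"
    using b unfolding II_def by (rule peq_appl)
  ultimately have "peq (dpow (mneg v) @ (dpow (mneg w) @ Nw u)) (dpow (mneg u) @ (dpow (mneg v) @ Nw w))"
    by (rule peq_trans)
  hence "peq (dpow (mneg v) @ (dpow (mneg w) @ Nw u)) (dpow (mneg v) @ (dpow (mneg u) @ Nw w))"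
    unfolding e3 .
  thus ?thesis unfolding II_def by (rule cancel)
qed

lemma II_ctx: assumes h: "II u v" shows "II (a @ u @ b) (a @ v @ b)"
proof -
  define A where "A = Nw a" define U where "U = Nw u" define V where "V = Nw v" define B where "B = Nw b"
  have iA: "inr4 A" "inr4 U" "inr4 V" using inr4_Nw A_def U_def V_def by auto
  have N1: "Nw (a @ u @ b) = taun (mneg u + mneg b) A @ taun (mneg b) U @ B"
    using Nw_app[of a "u @ b"] Nw_app[of u b] by (simp add: A_def U_def B_def mneg_app taun_app)
  have N2: "Nw (a @ v @ b) = taun (mneg v + mneg b) A @ taun (mneg b) V @ B"
    using Nw_app[of a "v @ b"] Nw_app[of v b] by (simp add: A_def V_def B_def mneg_app taun_app)
  have key: "\<And>mu mv U V. inr4 U \<Longrightarrow> peq (dpow mv @ U) (dpow mu @ V) \<Longrightarrow>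
     peq (dpow (mneg a + mv + mneg b) @ taun (mu + mneg b) A @ taun (mneg b) U @ B)
         (dpow (mneg a + mneg b) @ taun (mu + mv + mneg b) A @ dpow mu @ taun (mneg b) V @ B)"
  proof -
    fix mu mv U V assume iU: "inr4 U" and hh: "peq (dpow mv @ U) (dpow mu @ V)"
    have "dpow (mneg a + mv + mneg b) @ taun (mu + mneg b) A @ taun (mneg b) U @ B
        = dpow (mneg a + mneg b) @ (dpow mv @ taun (mu + mneg b) A) @ taun (mneg b) U @ B"
      by (simp add: dpow_add[symmetric] add.commute add.left_commute)
    also have "peq \<dots> (dpow (mneg a + mneg b) @ (taun mv (taun (mu + mneg b) A) @ dpow mv) @ taun (mneg b) U @ B)"
      using dpow_comm[OF inr4_taun[OF iA(1)], of mv "mu + mneg b"] by (intro peq_app)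
    also have "\<dots> = dpow (mneg a + mneg b) @ taun (mu + mv + mneg b) A @ (dpow mv @ taun (mneg b) U) @ B"
      using taun_add[OF iA(1)] by (simp add: add.commute add.left_commute)
    also have "peq \<dots> (dpow (mneg a + mneg b) @ taun (mu + mv + mneg b) A @ (taun (mneg b) (dpow mv @ U)) @ B)"
      using peq_app[OF peq_sym[OF taun_dpow[of "mneg b" mv]], of "dpow (mneg a + mneg b) @ taun (mu + mv + mneg b) A" "taun (mneg b) U @ B"]
      by (simp add: taun_app)
    also have "peq \<dots> (dpow (mneg a + mneg b) @ taun (mu + mv + mneg b) A @ (taun (mneg b) (dpow mu @ V)) @ B)"
      using peq_app[OF peq_taun[OF hh, of "mneg b"], of "dpow (mneg a + mneg b) @ taun (mu + mv + mneg b) A" B] by simp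
    also have "peq \<dots> (dpow (mneg a + mneg b) @ taun (mu + mv + mneg b) A @ (dpow mu @ taun (mneg b) V) @ B)"
      using peq_app[OF taun_dpow[of "mneg b" mu], of "dpow (mneg a + mneg b) @ taun (mu + mv + mneg b) A" "taun (mneg b) V @ B"]
      by (simp add: taun_app)
    finally show "peq (dpow (mneg a + mv + mneg b) @ taun (mu + mneg b) A @ taun (mneg b) U @ B)
         (dpow (mneg a + mneg b) @ taun (mu + mv + mneg b) A @ dpow mu @ taun (mneg b) V @ B)" by simp
  qed
  have L: "peq (dpow (mneg a + mneg v + mneg b) @ taun (mneg u + mneg b) A @ taun (mneg b) U @ B)
         (dpow (mneg a + mneg b) @ taun (mneg u + mneg v + mneg b) A @ dpow (mneg u) @ taun (mneg b) V @ B)"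
    using key[OF iA(2)] h unfolding II_def U_def V_def by blast
  have "dpow (mneg a + mneg u + mneg b) @ taun (mneg v + mneg b) A @ taun (mneg b) V @ B
      = dpow (mneg a + mneg b) @ (dpow (mneg u) @ taun (mneg v + mneg b) A) @ taun (mneg b) V @ B"
    by (simp add: dpow_add[symmetric] add.commute add.left_commute)
  also have "peq \<dots> (dpow (mneg a + mneg b) @ (taun (mneg u) (taun (mneg v + mneg b) A) @ dpow (mneg u)) @ taun (mneg b) V @ B)"
    using dpow_comm[OF inr4_taun[OF iA(1)], of "mneg u" "mneg v + mneg b"] by (intro peq_app)
  also have "\<dots> = dpow (mneg a + mneg b) @ taun (mneg u + mneg v + mneg b) A @ dpow (mneg u) @ taun (mneg b) V @ B"
    using taun_add[OF iA(1)] by (simp add: add.commute add.left_commute)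
  finally have R: "peq (dpow (mneg a + mneg u + mneg b) @ taun (mneg v + mneg b) A @ taun (mneg b) V @ B)
         (dpow (mneg a + mneg b) @ taun (mneg u + mneg v + mneg b) A @ dpow (mneg u) @ taun (mneg b) V @ B)" .
  show ?thesis unfolding II_def N1 N2 mneg_app
    using peq_trans[OF L peq_sym[OF R]] by (simp add: add.commute add.left_commute)
qed

lemma bq_II: "bequiv u v \<Longrightarrow> II u v"
proof (induction rule: bequiv.induct)
  case (refl w) thus ?case by (simp add: II_def)
next
  case (sym u v) thus ?case by (simp add: II_def peq_sym)
next
  case (trans u v w) thus ?case using II_trans by blast
next
  case (ctx u v a b) thus ?case using II_ctx by blast
next
  case (cancel i e)
  hence i: "1 \<le> i" "i \<le> 4" by auto
  show ?case
  proof (cases e)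
    case True
    have "peq (tau (i # Xi i)) Dw" using peq_trans[OF peq_tau[OF Xi_props(1)[OF i]] tauDw] .
    thus ?thesis using True i by (simp add: II_def Nw_def nstep_def mneg_def dpow_def)
  next
    case False
    thus ?thesis using Xi_props(2)[OF i] i by (simp add: II_def Nw_def nstep_def mneg_def dpow_def)
  qed
next
  case (far_comm i j)
  hence "far i j" by (auto simp: far_def)
  thus ?case using far_comm by (auto simp: II_def Nw_def nstep_def mneg_def dpow_def intro: pf[of i j "[]", simplified])
next
  case (braid_rel i)
  hence "adj i (Suc i)" by (auto simp: adj_def)
  thus ?case using braid_rel by (auto simp: II_def Nw_def nstep_def mneg_def dpow_def intro: pb[of i "Suc i" "[]", simplified])
qed

lemma Nw_P: "inr4 u \<Longrightarrow> Nw (P u) = u"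
proof (induction u rule: rev_induct)
  case Nil thus ?case by (simp add: Nw_def P_def)
next
  case (snoc i u)
  hence "inr4 u" "1 \<le> i \<and> i \<le> 4" by (auto simp: inr4_def)
  thus ?case using snoc.IH by (simp add: P_app P_def[of "[i]"] Nw_snoc nstep_def)
qed

lemma mneg_P: "mneg (P u) = 0" by (simp add: mneg_def P_def filter_empty_conv)

lemma embed: "bequiv (P u) (P v) \<Longrightarrow> inr4 u \<Longrightarrow> inr4 v \<Longrightarrow> peq u v"
  using bq_II[of "P u" "P v"] by (simp add: II_def Nw_P mneg_P dpow_def)

declare bequiv.trans[trans]

lemma bq_trans3: "bequiv a b \<Longrightarrow> bequiv b c \<Longrightarrow> bequiv a c" by (rule bequiv.trans)

lemma inrw_inr4: "inrw (P w) \<Longrightarrow> inr4 w" by (auto simp: inrw_def inr4_def P_def)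

lemma positive_P: "positive x \<Longrightarrow> \<exists>w. inr4 w \<and> bequiv x (P w)"
proof -
  assume "positive x"
  then obtain w where w: "\<forall>l\<in>set w. fst l \<in> {1..4} \<and> snd l" "bequiv x w" unfolding Defs.positive_def by blast
  have "w = P (map fst w)" using w(1) by (auto simp: P_def intro!: map_idI[symmetric] prod_eqI)
  moreover have "inr4 (map fst w)" using w(1) by (auto simp: inr4_def)
  ultimately show ?thesis using w(2) by metis
qed

lemma P_positive: assumes "inr4 w" "bequiv x (P w)" shows "positive x"
proof -
  have "\<forall>l\<in>set (P w). fst l \<in> {1..4} \<and> snd l" using assms(1) by (auto simp: P_def inr4_def)
  thus ?thesis using assms(2) unfolding Defs.positive_def by blast
qed

lemma simple_of: assumes "bequiv x (P w)" "simp_m w" shows "simple x"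
proof -
  have iw: "inr4 w" using simp_inr4 assms(2) by blast
  have ix: "inrw x" using bq_inrw[OF assms(1) inrw_P[OF iw]] .
  obtain t where t: "peq (w @ t) Dw" using assms(2) by (auto simp: simp_m_def)
  have it: "inr4 t" using peq_inr4[OF peq_sym[OF t] inr4_Dw] by (simp add: inr4_app)
  have p1: "prefix_le [] x" unfolding prefix_le_def using P_positive[OF iw] assms(1) by (simp add: winv_def)
  have "bequiv (winv x @ Delta) (winv x @ P (w @ t))"
    using bq_appl[OF peq_bq[OF peq_sym[OF t]]] Delta_P by simp
  also have "bequiv \<dots> (winv x @ x @ P t)" using bq_appl[OF bq_appr[OF bequiv.sym[OF assms(1)]]] by (simp add: P_app)
  also have "bequiv \<dots> ([] @ P t)" using bq_appr[OF bq_cancel2[OF ix]] by simp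
  finally have "positive (winv x @ Delta)" using P_positive[OF it] by simp
  thus ?thesis using p1 by (simp add: simple_def prefix_le_def)
qed

lemma simple_P: assumes "simple x" shows "\<exists>w. bequiv x (P w) \<and> simp_m w"
proof -
  obtain w where w: "inr4 w" "bequiv x (P w)" using positive_P assms by (auto simp: simple_def prefix_le_def winv_def)
  have ix: "inrw x" using bq_inrw[OF w(2) inrw_P[OF w(1)]] .
  obtain z where z: "inr4 z" "bequiv (winv x @ Delta) (P z)"
    using positive_P assms by (auto simp: simple_def prefix_le_def)
  have "bequiv Delta ([] @ Delta)" by (simp add: bequiv.refl)
  also have "bequiv \<dots> ((x @ winv x) @ Delta)" using bq_appr[OF bequiv.sym[OF bq_cancel1[OF ix]]] .
  also have "bequiv \<dots> (x @ P z)" using bq_appl[OF z(2)] by simp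
  also have "bequiv \<dots> (P w @ P z)" using bq_appr[OF w(2)] .
  finally have "bequiv (P Dw) (P (w @ z))" using Delta_P by (simp add: P_app)
  hence "peq Dw (w @ z)" using embed inr4_Dw w(1) z(1) by (simp add: inr4_app)
  thus ?thesis using w(2) peq_sym by (auto simp: simp_m_def)
qed

lemma sig_P: "sig i = P [i]" by (simp add: sig_def P_def)

lemma chain_of: "(\<forall>w\<in>set ws. good w) \<Longrightarrow> (\<forall>i. Suc i < length ws \<longrightarrow> LW (ws ! i) (ws ! Suc i)) \<Longrightarrow> chain ws"
proof (induction ws rule: chain.induct)
  case 1 thus ?case by simp
next
  case (2 W) thus ?case by simp
next
  case (3 W1 W2 Ws)
  have "LW W1 W2" using "3.prems"(2)[rule_format, of 0] by simp
  moreover have "chain (W2 # Ws)"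
    using "3.IH" "3.prems" by (auto intro: "3.IH" simp del: chain.simps) (metis Suc_less_eq nth_Cons_Suc)
  ultimately show ?case using "3.prems"(1) by simp
qed

definition wdf :: "bword \<Rightarrow> nat list" where "wdf s = (SOME w. bequiv s (P w) \<and> simp_m w)"

lemma wdf_prop: assumes "simple s" shows "bequiv s (P (wdf s)) \<and> simp_m (wdf s)"
  unfolding wdf_def by (rule someI_ex) (rule simple_P[OF assms])

lemma concat_wdf: "(\<forall>s\<in>set xs. simple s) \<Longrightarrow> bequiv (concat xs) (P (concat (map wdf xs)))"
proof (induction xs)
  case Nil thus ?case by (simp add: P_def bequiv.refl)
next
  case (Cons s xs) thus ?case using bq_app[OF conjunct1[OF wdf_prop]] by (simp add: P_app)
qed

lemma good_wdf: "simple s \<Longrightarrow> \<not> bequiv s [] \<Longrightarrow> \<not> bequiv s Delta \<Longrightarrow> good (wdf s)"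
proof -
  assume s: "simple s" and n1: "\<not> bequiv s []" and n2: "\<not> bequiv s Delta"
  note w = wdf_prop[OF s]
  have "wdf s \<noteq> []" using w n1 by (auto simp: P_def)
  moreover have "\<not> peq (wdf s) Dw"
  proof
    assume "peq (wdf s) Dw"
    hence "bequiv s Delta" using bequiv.trans[OF conjunct1[OF w] peq_bq[OF \<open>peq (wdf s) Dw\<close>]] Delta_P by simp
    thus False using n2 by blast
  qed
  ultimately show ?thesis using w by (simp add: good_def)
qed

lemma LW_wdf: assumes s1: "simple s1" and s2: "simple s2" and lw: "left_weighted s1 s2"
  shows "LW (wdf s1) (wdf s2)"
  unfolding LW_def
proof (intro allI impI notI)
  fix m Z y assume h1: "peq (wdf s2) (m # Z)" and h2: "peq (wdf s1 @ m # y) Dw"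
  note w1 = wdf_prop[OF s1] and w2 = wdf_prop[OF s2]
  have "inr4 (m # Z)" using peq_inr4[OF h1 simp_inr4[OF conjunct2[OF w2]]] .
  hence m: "m \<in> {1..4}" by (auto simp: inr4_def)
  have a: "simple (s1 @ sig m)"
  proof (rule simple_of)
    show "bequiv (s1 @ sig m) (P (wdf s1 @ [m]))" using bq_appr[OF conjunct1[OF w1]] by (simp add: sig_P P_app)
    show "simp_m (wdf s1 @ [m])" using h2 by (auto simp: simp_m_def)
  qed
  have b: "simple (winv (sig m) @ s2)"
  proof (rule simple_of)
    have "bequiv (winv (sig m) @ s2) (winv (P [m]) @ P (m # Z))"
      using bq_appl[OF bequiv.trans[OF conjunct1[OF w2] peq_bq[OF h1]]] by (simp add: sig_P)
    also have "\<dots> = (winv (P [m]) @ P [m]) @ P Z" by (simp add: P_def)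
    also have "bequiv \<dots> ([] @ P Z)"
    proof -
      have im: "inrw (P [m])" using m by (simp add: inrw_def P_def)
      show ?thesis using bq_appr[OF bq_cancel2[OF im], of "P Z"] .
    qed
    finally show "bequiv (winv (sig m) @ s2) (P Z)" by simp
    have "red (m # Z)" using red_peq[OF h1 simp_red[OF conjunct2[OF w2]]] .
    thus "simp_m Z" using red_Cons(1) red_simp by blast
  qed
  show False using lw a b m unfolding left_weighted_def by blast
qed

lemma readback: "is_LNF x p xs \<Longrightarrow> \<exists>ws. chain ws \<and> length ws = length xs \<and> bequiv x (Delta_pow p @ P (concat ws))"
proof -
  assume h: "is_LNF x p xs"
  have sx: "\<forall>s\<in>set xs. simple s \<and> \<not> bequiv s [] \<and> \<not> bequiv s Delta" using h by (simp add: is_LNF_def)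
  have "chain (map wdf xs)"
  proof (rule chain_of)
    show "\<forall>w\<in>set (map wdf xs). good w" using sx good_wdf by auto
    show "\<forall>i. Suc i < length (map wdf xs) \<longrightarrow> LW (map wdf xs ! i) (map wdf xs ! Suc i)"
    proof (intro allI impI)
      fix i assume i: "Suc i < length (map wdf xs)"
      hence "xs ! i \<in> set xs" "xs ! Suc i \<in> set xs" by auto
      moreover have "left_weighted (xs ! i) (xs ! Suc i)" using h i by (simp add: is_LNF_def)
      ultimately show "LW (map wdf xs ! i) (map wdf xs ! Suc i)" using LW_wdf sx i by simp
    qed
  qed
  moreover have "bequiv x (Delta_pow p @ P (concat (map wdf xs)))"
    using bequiv.trans[OF conjunct1[OF h[unfolded is_LNF_def]] bq_appl[OF concat_wdf]] sx by blast
  ultimately show ?thesis by (intro exI[of _ "map wdf xs"]) simp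
qed

lemma wpow_P: "wpow (P w) n = P (concat (replicate n w))"
  by (induction n) (auto simp: wpow_def P_app P_Nil)

lemma winv_concat_rep: "winv (concat (replicate n w)) = concat (replicate n (winv w))"
proof (induction n)
  case 0 thus ?case by (simp add: winv_def)
next
  case (Suc n)
  have "winv (concat (replicate (Suc n) w)) = winv (concat (replicate n w)) @ winv w" by (simp add: winv_app)
  also have "\<dots> = concat (replicate n (winv w)) @ winv w" using Suc by simp
  also have "\<dots> = concat (replicate (Suc n) (winv w))" by (simp add: replicate_append_same[symmetric])
  finally show ?case .
qed

lemma Dpow_shift: assumes "0 \<le> int n + p" shows "bequiv (P (dpow n) @ Delta_pow p) (P (dpow (nat (int n + p))))"
proof (cases "0 \<le> p")
  case True
  have "Delta_pow p = P (dpow (nat p))" using True by (simp add: Delta_pow_def Delta_P wpow_P dpow_def)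
  moreover have "nat (int n + p) = n + nat p" using True by simp
  ultimately show ?thesis by (simp add: P_app[symmetric] dpow_add bequiv.refl)
next
  case False
  define m where "m = nat (- p)"
  have mn: "m \<le> n" using assms False m_def by simp
  have "P (dpow m) = wpow Delta m" by (simp add: wpow_P Delta_P dpow_def)
  hence "winv (P (dpow m)) = wpow (winv Delta) m" by (simp add: wpow_def winv_concat_rep)
  hence D: "Delta_pow p = winv (P (dpow m))" using False by (simp add: Delta_pow_def m_def)
  have e: "dpow n = dpow (n - m) @ dpow m" using mn dpow_add[of "n - m" m] by simp
  have "P (dpow n) @ Delta_pow p = P (dpow (n - m)) @ (P (dpow m) @ winv (P (dpow m)))"
    using D e by (simp add: P_app)
  also have "bequiv \<dots> (P (dpow (n - m)) @ [])"
    using bq_appl[OF bq_cancel1[OF inrw_P[OF inr4_dpow]]] .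
  also have "n - m = nat (int n + p)" using mn m_def False by simp
  hence "P (dpow (n - m)) @ [] = P (dpow (nat (int n + p)))" by simp
  finally show ?thesis .
qed

theorem LNF_unique: assumes "is_LNF x p xs" "is_LNF x q ys" shows "p = q \<and> length xs = length ys"
proof -
  obtain ws where ws: "chain ws" "length ws = length xs" "bequiv x (Delta_pow p @ P (concat ws))"
    using readback[OF assms(1)] by blast
  obtain vs where vs: "chain vs" "length vs = length ys" "bequiv x (Delta_pow q @ P (concat vs))"
    using readback[OF assms(2)] by blast
  define n where "n = nat (\<bar>p\<bar> + \<bar>q\<bar>)"
  have np: "0 \<le> int n + p" and nq: "0 \<le> int n + q" using n_def by auto
  have "bequiv (P (dpow (nat (int n + p)) @ concat ws)) (P (dpow n) @ (Delta_pow p @ P (concat ws)))"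
    using bq_appr[OF bequiv.sym[OF Dpow_shift[OF np]]] by (simp add: P_app)
  also have "bequiv \<dots> (P (dpow n) @ x)" using bq_appl[OF bequiv.sym[OF ws(3)]] .
  also have "bequiv \<dots> (P (dpow n) @ (Delta_pow q @ P (concat vs)))" using bq_appl[OF vs(3)] .
  also have "bequiv \<dots> (P (dpow (nat (int n + q)) @ concat vs))"
    using bq_appr[OF Dpow_shift[OF nq]] by (simp add: P_app)
  finally have "peq (dpow (nat (int n + p)) @ concat ws) (dpow (nat (int n + q)) @ concat vs)"
    using embed inr4_dpow chain_concat_inr4 ws(1) vs(1) by (simp add: inr4_app)
  then obtain a b where ab: "peq (dpow a @ concat ws) (dpow b @ concat vs)" "int a - int b = p - q"
    using np nq by (intro that[of "nat (int n + p)" "nat (int n + q)"]) auto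
  have pq: "p = q"
  proof (rule ccontr)
    assume "p \<noteq> q"
    show False
    proof (cases "a < b")
      case True
      have "peq (dpow a @ concat ws) (dpow a @ (dpow (b - a) @ concat vs))"
        using ab(1) True dpow_add[of a "b - a"] by simp
      hence "peq (concat ws) (dpow (b - a) @ concat vs)" by (rule cancel)
      hence "b - a = 0" using inf_unique[OF vs(1) ws(1)] peq_sym by blast
      thus False using True by simp
    next
      case False
      have "peq (dpow b @ (dpow (a - b) @ concat ws)) (dpow b @ concat vs)"
        using ab(1) False dpow_add[of b "a - b"] by simp
      hence "peq (dpow (a - b) @ concat ws) (concat vs)" by (rule cancel)
      hence "a - b = 0" using inf_unique[OF ws(1) vs(1)] by blast
      thus False using False ab(2) \<open>p \<noteq> q\<close> by simp
    qed
  qed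
  hence "a = b" using ab(2) by simp
  hence "peq (concat ws) (concat vs)" using ab(1) cancel by blast
  thus ?thesis using sup_unique[OF ws(1) vs(1)] ws(2) vs(2) pq by simp
qed

definition es :: "bword \<Rightarrow> int" where "es w = sum_list (map (\<lambda>l. if snd l then 1 else -1) w)"
definition pwg :: "bword \<Rightarrow> nat list" where "pwg w = pwm (map fst w)"

lemma es_app: "es (u @ v) = es u + es v" by (simp add: es_def)
lemma pwg_app: "pwg (u @ v) = pcomp (pwg u) (pwg v)" by (simp add: pwg_def pwm_append)

lemma bq_inv: "bequiv u v \<Longrightarrow> es u = es v \<and> pwg u = pwg v"
proof (induction rule: bequiv.induct)
  case (ctx u v a b) thus ?case by (simp add: es_app pwg_app)
next
  case (cancel i e)
  hence "i = 1 \<or> i = 2 \<or> i = 3 \<or> i = 4" by auto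
  thus ?case by (auto simp: es_def pwg_def pwm_def idp_def)
next
  case (far_comm i j)
  hence "far i j" by (auto simp: far_def)
  thus ?case using pwm_far by (simp add: es_def pwg_def)
next
  case (braid_rel i)
  hence "adj i (Suc i)" by (auto simp: adj_def)
  thus ?case using pwm_adj by (simp add: es_def pwg_def)
qed auto

lemma es_P: "es (P w) = int (length w)" by (induction w) (auto simp: es_def P_def)
lemma pwg_P: "pwg (P w) = pwm w" by (simp add: pwg_def P_def o_def)

lemma simple_inv: "simple x \<Longrightarrow> int (inv5 (pwg x)) = es x"
proof -
  assume "simple x"
  then obtain w where w: "bequiv x (P w)" "simp_m w" using simple_P by blast
  have "red w" using simp_red w(2) .
  thus ?thesis using bq_inv[OF w(1)] by (simp add: es_P pwg_P red_def)
qed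

lemma lw_check: assumes "\<forall>i\<in>{1,2,3,4}. int (inv5 (pwg (s1 @ sig i))) \<noteq> es (s1 @ sig i) \<or>
    int (inv5 (pwg (winv (sig i) @ s2))) \<noteq> es (winv (sig i) @ s2)"
  shows "left_weighted s1 s2"
proof -
  have "\<And>i. i \<in> {1..4} \<Longrightarrow> i \<in> {1,2,3,4::nat}" by auto
  thus ?thesis using assms simple_inv unfolding left_weighted_def by blast
qed

definition wA :: "nat list" where "wA = [2,1,2,4]"
definition wB :: "nat list" where "wB = [2,1,4,3,4]"
definition wC :: "nat list" where "wC = [3,4]"
definition wD :: "nat list" where "wD = [4]"

lemma lwAA: "left_weighted (P wA) (P wA)"
  by (rule lw_check) (simp add: wA_def P_def sig_def winv_def es_def pwg_def pwm_def idp_def)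
lemma lwAB: "left_weighted (P wA) (P wB)"
  by (rule lw_check) (simp add: wA_def wB_def P_def sig_def winv_def es_def pwg_def pwm_def idp_def)
lemma lwBC: "left_weighted (P wB) (P wC)"
  by (rule lw_check) (simp add: wC_def wB_def P_def sig_def winv_def es_def pwg_def pwm_def idp_def)
lemma lwCD: "left_weighted (P wC) (P wD)"
  by (rule lw_check) (simp add: wC_def wD_def P_def sig_def winv_def es_def pwg_def pwm_def idp_def)
lemma lwDD: "left_weighted (P wD) (P wD)"
  by (rule lw_check) (simp add: wD_def P_def sig_def winv_def es_def pwg_def pwm_def idp_def)

lemma factor_ok: assumes "red w" "w \<noteq> []" "length w \<noteq> 10"
  shows "simple (P w) \<and> \<not> bequiv (P w) [] \<and> \<not> bequiv (P w) Delta"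
proof -
  have "simple (P w)" using simple_of[OF bequiv.refl red_simp[OF assms(1)]] .
  moreover have "\<not> bequiv (P w) []"
  proof
    assume "bequiv (P w) []"
    hence "es (P w) = es []" using bq_inv by blast
    thus False using assms(2) es_P[of w] by (simp add: es_def)
  qed
  moreover have "\<not> bequiv (P w) Delta"
  proof
    assume "bequiv (P w) Delta"
    hence "es (P w) = es (P Dw)" using bq_inv Delta_P by metis
    thus False using assms(3) es_P[of w] es_P[of Dw] len_Dw by simp
  qed
  ultimately show ?thesis by blast
qed

lemma fA: "simple (P wA) \<and> \<not> bequiv (P wA) [] \<and> \<not> bequiv (P wA) Delta"
  by (rule factor_ok) (simp_all add: wA_def red_def pwm_def idp_def)
lemma fB: "simple (P wB) \<and> \<not> bequiv (P wB) [] \<and> \<not> bequiv (P wB) Delta"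
  by (rule factor_ok) (simp_all add: wB_def red_def pwm_def idp_def)
lemma fC: "simple (P wC) \<and> \<not> bequiv (P wC) [] \<and> \<not> bequiv (P wC) Delta"
  by (rule factor_ok) (simp_all add: wC_def red_def pwm_def idp_def)
lemma fD: "simple (P wD) \<and> \<not> bequiv (P wD) [] \<and> \<not> bequiv (P wD) Delta"
  by (rule factor_ok) (simp_all add: wD_def red_def pwm_def idp_def)

lemma pairs_ok:
  assumes n: "1 \<le> n" and m: "1 \<le> m"
    and r: "R a a" "R a b" "R b c" "R c d" "R d d"
  shows "\<forall>i. Suc i < length (replicate n a @ [b, c] @ replicate m d) \<longrightarrow>
     R ((replicate n a @ [b, c] @ replicate m d) ! i) ((replicate n a @ [b, c] @ replicate m d) ! Suc i)"
proof (intro allI impI)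
  fix i assume i: "Suc i < length (replicate n a @ [b, c] @ replicate m d)"
  let ?L = "replicate n a @ [b, c] @ replicate m d"
  have L1: "\<And>j. j < n \<Longrightarrow> ?L ! j = a" by (simp add: nth_append)
  have L2: "?L ! n = b" by (simp add: nth_append)
  have L3: "?L ! Suc n = c" by (simp add: nth_append)
  have L4: "\<And>j. Suc (Suc n) \<le> j \<Longrightarrow> j < n + 2 + m \<Longrightarrow> ?L ! j = d"
  proof -
    fix j assume "Suc (Suc n) \<le> j" "j < n + 2 + m"
    hence "?L ! j = replicate m d ! (j - n - 2)" by (simp add: nth_append)
    thus "?L ! j = d" using \<open>j < n + 2 + m\<close> \<open>Suc (Suc n) \<le> j\<close> by simp
  qed
  have len: "length ?L = n + 2 + m" by simp
  consider "Suc i < n" | "Suc i = n" | "i = n" | "i = Suc n" | "Suc (Suc n) \<le> i" by linarith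
  thus "R (?L ! i) (?L ! Suc i)"
  proof cases
    case 1 thus ?thesis using L1 r by simp
  next
    case 2 thus ?thesis using L1 L2 r by (metis lessI)
  next
    case 3 thus ?thesis using L2 L3 r by simp
  next
    case 4 thus ?thesis using L3 L4[of "Suc (Suc n)"] r m by simp
  next
    case 5 thus ?thesis using L4[of i] L4[of "Suc i"] r i len by simp
  qed
qed

lemma rep4: "concat (replicate n [x]) = replicate n x" by (induction n) auto

lemma L1: "set w \<subseteq> {1,2} \<Longrightarrow> peq (4 # w) (w @ [4])"
proof (induction w)
  case Nil thus ?case by simp
next
  case (Cons a w)
  hence "far 4 a" "set w \<subseteq> {1,2}" by (auto simp: far_def)
  have "peq (4 # a # w) (a # 4 # w)" using \<open>far 4 a\<close> by (rule pf)
  also have "peq \<dots> (a # w @ [4])" using Cons.IH[OF \<open>set w \<subseteq> {1,2}\<close>] by (rule pc1)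
  finally show ?case by simp
qed

lemma L1': "set w \<subseteq> {1,2} \<Longrightarrow> peq (replicate n 4 @ w) (w @ replicate n 4)"
proof (induction n)
  case 0 thus ?case by simp
next
  case (Suc n)
  have "peq (replicate (Suc n) 4 @ w) (4 # (w @ replicate n 4))" using pc1[OF Suc.IH[OF Suc.prems]] by simp
  also have "peq \<dots> ((w @ [4]) @ replicate n 4)" using peq_appr[OF L1[OF Suc.prems]] by simp
  finally show ?case by (simp add: replicate_append_same[symmetric])
qed

lemma set_rep212: "set (concat (replicate n [2,1,2::nat])) \<subseteq> {1,2}" by auto

lemma L2: "peq (concat (replicate n wA)) (concat (replicate n [2,1,2]) @ replicate n 4)"
proof (induction n)
  case 0 thus ?case by simp
next
  case (Suc n)
  have "peq (concat (replicate (Suc n) wA)) ([2,1,2] @ [4] @ (concat (replicate n [2,1,2]) @ replicate n 4))"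
    using peq_appl[OF Suc.IH, of "[2,1,2,4]"] by (simp add: wA_def)
  also have "peq \<dots> ([2,1,2] @ (concat (replicate n [2,1,2]) @ [4]) @ replicate n 4)"
    using peq_app[OF L1[OF set_rep212[of n]], of "[2,1,2]" "replicate n 4"] by simp
  finally show ?case by simp
qed

lemma L3: "peq (concat (replicate (2 * m) [2,1,2])) (concat (replicate (3 * m) [2,1::nat]))"
proof (induction m)
  case 0 thus ?case by simp
next
  case (Suc m)
  have a: "adj 2 (1::nat)" by (simp add: adj_def)
  have "concat (replicate (2 * Suc m) [2,1,2]) = [2,1,2,2,1,2] @ concat (replicate (2 * m) [2,1,2::nat])"
    by simp
  also have "peq \<dots> ([2,1,2,1,2,1] @ concat (replicate (2 * m) [2,1,2::nat]))"
    using pc3[OF pb[OF a]] by simp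
  also have "peq \<dots> ([2,1,2,1,2,1] @ concat (replicate (3 * m) [2,1::nat]))" using Suc.IH by (rule peq_appl)
  also have "[2,1,2,1,2,1] @ concat (replicate (3 * m) [2,1::nat]) = concat (replicate (3 * Suc m) [2,1::nat])"
    by (simp add: numeral_3_eq_3)
  finally show ?case .
qed

lemma L4: "peq [4,3,4,3,4] [4,4,3,4,4::nat]"
  using pc1[OF pb[of 3 4 "[4]"]] by (simp add: adj_def)

lemma crep: "concat (replicate n w) @ w = concat (replicate (n + 1) w)" by (induction n) auto

lemma peq_eqI: "u = v \<Longrightarrow> peq u v" by simp

lemma beta_peq: assumes "2 \<le> k"
  shows "peq (concat (replicate (2 * k) wA) @ wB @ wC @ replicate (2 * k - 3) 4)
             (concat (replicate (3 * k + 1) [2,1]) @ replicate (2 * k + 2) 4 @ [3] @ replicate (2 * k - 1) 4)"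
proof -
  define j where "j = 2 * k - 3"
  have e1: "concat (replicate (3 * k) [2,1::nat]) @ [2,1] = concat (replicate (3 * k + 1) [2,1])"
    by (rule crep)
  have e2: "replicate (2 * k) (4::nat) @ [4,4] = replicate (2 * k + 2) 4"
  proof -
    have "\<And>n. replicate n (4::nat) @ [4,4] = replicate (n + 2) 4" by (induct_tac n) auto
    thus ?thesis by blast
  qed
  have e3: "[4,4] @ replicate j (4::nat) = replicate (2 * k - 1) 4"
  proof -
    have a: "[4,4] @ replicate j (4::nat) = replicate (j + 2) 4" by simp
    have b: "j + 2 = 2 * k - 1" using assms j_def by simp
    show ?thesis using a unfolding b .
  qed
  define X1 where "X1 = concat (replicate (2 * k) [2,1,2::nat])"
  define X2 where "X2 = concat (replicate (3 * k) [2,1::nat])"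
  define F where "F = replicate (2 * k) (4::nat)"
  define T where "T = replicate j (4::nat)"
  have s1: "peq (concat (replicate (2 * k) wA) @ wB @ wC @ T) ((X1 @ F) @ [2,1] @ [4,3,4,3,4] @ T)"
    using peq_appr[OF L2[of "2 * k"], of "[2,1] @ [4,3,4,3,4] @ T"] by (simp add: wB_def wC_def X1_def F_def)
  have s2: "peq ((X1 @ F) @ [2,1] @ [4,3,4,3,4] @ T) (X1 @ ([2,1] @ F) @ [4,3,4,3,4] @ T)"
    using peq_app[OF L1'[of "[2,1]" "2 * k"], of X1 "[4,3,4,3,4] @ T"] by (simp add: F_def)
  have s3: "peq (X1 @ ([2,1] @ F) @ [4,3,4,3,4] @ T) (X2 @ ([2,1] @ F) @ [4,3,4,3,4] @ T)"
    using peq_appr[OF L3[of k], of "([2,1] @ F) @ [4,3,4,3,4] @ T"] by (simp add: X1_def X2_def)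
  have s4: "peq (X2 @ ([2,1] @ F) @ [4,3,4,3,4] @ T) (X2 @ ([2,1] @ F) @ [4,4,3,4,4] @ T)"
    using peq_app[OF L4, of "X2 @ ([2,1] @ F)" T] by simp
  have s5: "X2 @ ([2,1] @ F) @ [4,4,3,4,4] @ T = (X2 @ [2,1]) @ (F @ [4,4]) @ [3] @ ([4,4] @ T)"
    by simp
  have s6: "(X2 @ [2,1]) @ (F @ [4,4]) @ [3] @ ([4,4] @ T)
      = concat (replicate (3 * k + 1) [2,1]) @ replicate (2 * k + 2) 4 @ [3] @ replicate (2 * k - 1) 4"
    unfolding X2_def F_def T_def e1 e2 e3 ..
  have "peq (concat (replicate (2 * k) wA) @ wB @ wC @ T)
          (concat (replicate (3 * k + 1) [2,1]) @ replicate (2 * k + 2) 4 @ [3] @ replicate (2 * k - 1) 4)"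
    using peq_trans[OF s1 peq_trans[OF s2 peq_trans[OF s3 s4]]] s5 s6 by simp
  thus ?thesis unfolding T_def j_def .
qed

lemma concat_rep_P: "concat (replicate n (P w)) = P (concat (replicate n w))"
  using wpow_P[of w n] by (simp add: wpow_def)

theorem mainTheorem2:
  fixes k :: nat
  assumes "k \<ge> 2"
  defines "beta \<equiv> wpow delta3 (3 * k + 1) @ wpow (sig 4) (2 * k + 2) @ sig 3 @ wpow (sig 4) (2 * k - 1)"
  shows "is_LNF beta 0
           (replicate (2 * k) (Delta3 @ sig 4) @ [delta3 @ sig 4 @ sig 3 @ sig 4, sig 3 @ sig 4]
            @ replicate (2 * k - 3) (sig 4))
         \<and> binf beta = 0 \<and> bsup beta = 4 * int k - 1"
proof -
  define xs0 where "xs0 = replicate (2 * k) (Delta3 @ sig 4) @ [delta3 @ sig 4 @ sig 3 @ sig 4, sig 3 @ sig 4]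
            @ replicate (2 * k - 3) (sig 4)"
  have xs0_eq: "xs0 = replicate (2 * k) (P wA) @ [P wB, P wC] @ replicate (2 * k - 3) (P wD)"
    by (simp add: xs0_def Delta3_def delta3_def sig_def P_def wA_def wB_def wC_def wD_def)
  have beta_eq: "beta = P (concat (replicate (3 * k + 1) [2,1]) @ replicate (2 * k + 2) 4 @ [3] @ replicate (2 * k - 1) 4)"
  proof -
    have d3: "delta3 = P [2,1]" by (simp add: delta3_def sig_def P_def)
    have "beta = wpow (P [2,1]) (3 * k + 1) @ wpow (P [4]) (2 * k + 2) @ P [3] @ wpow (P [4]) (2 * k - 1)"
      unfolding beta_def d3 sig_P ..
    thus ?thesis by (simp only: wpow_P rep4 P_app)
  qed
  have cxs0: "concat xs0 = P (concat (replicate (2 * k) wA) @ wB @ wC @ replicate (2 * k - 3) 4)"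
    unfolding xs0_eq by (simp add: concat_rep_P P_app rep4 wD_def)
  have L: "is_LNF beta 0 xs0"
    unfolding is_LNF_def
  proof (intro conjI)
    have "Delta_pow 0 = []" by (simp add: Delta_pow_def wpow_def)
    thus "bequiv beta (Delta_pow 0 @ concat xs0)"
      using peq_bq[OF peq_sym[OF beta_peq[OF assms(1)]]] beta_eq cxs0 by simp
    show "\<forall>s\<in>set xs0. simple s \<and> \<not> bequiv s [] \<and> \<not> bequiv s Delta"
    proof
      fix s assume "s \<in> set xs0"
      hence "s = P wA \<or> s = P wB \<or> s = P wC \<or> s = P wD" unfolding xs0_eq
        by (simp split: if_splits) blast
      thus "simple s \<and> \<not> bequiv s [] \<and> \<not> bequiv s Delta" using fA fB fC fD by blast
    qed
    show "\<forall>i. Suc i < length xs0 \<longrightarrow> left_weighted (xs0 ! i) (xs0 ! Suc i)"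
      unfolding xs0_eq
      by (rule pairs_ok[of "2 * k" "2 * k - 3" left_weighted, OF _ _ lwAA lwAB lwBC lwCD lwDD])
         (use assms in auto)
  qed
  have len: "int (length xs0) = 4 * int k - 1" using assms by (simp add: xs0_eq)
  have b1: "binf beta = 0"
    unfolding binf_def
  proof (rule the_equality)
    show "\<exists>xs. is_LNF beta 0 xs" using L by blast
    show "\<And>p. \<exists>xs. is_LNF beta p xs \<Longrightarrow> p = 0" using LNF_unique L by blast
  qed
  have b2: "bsup beta = 4 * int k - 1"
    unfolding bsup_def
  proof (rule the_equality)
    show "\<exists>p xs. is_LNF beta p xs \<and> 4 * int k - 1 = p + int (length xs)"
      by (rule exI[of _ 0], rule exI[of _ xs0]) (simp add: L len)
    fix n assume "\<exists>p xs. is_LNF beta p xs \<and> n = p + int (length xs)"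
    then obtain p xs where h: "is_LNF beta p xs" "n = p + int (length xs)" by blast
    have "p = 0 \<and> length xs = length xs0" using LNF_unique[OF h(1) L] .
    thus "n = 4 * int k - 1" using h(2) len by simp
  qed
  show ?thesis using L b1 b2 xs0_def by simp
qed

end
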